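(* Let $\{\rho^{(i)}\}_{i\ge0}\subset\mathcal R^*$ be the sequence generated by the alternating optimization algorithm, $\rho^{(i+1)}=\mathcal A(\rho^{(i)})$, from an initial $\rho^{(0)}$ with $\rho^{(0)}_k=\mathcal N(0,\Sigma_{\rho^{(0)}_k})$, $\Sigma_{\rho^{(0)}_k}\succ0$. Then the set $\mathcal E$ of all cluster points of $\{\rho^{(i)}\}$ satisfies $\mathcal E\subset\{\rho\in\mathcal R^*\mid\rho=\mathcal A(\rho)\}$.
   Context: Fix integers $n,m,T\ge 1$, $\varepsilon>0$, matrices $A_k\in\mathbb R^{n\times n}$, $B_k\in\mathbb R^{n\times m}$, and symmetric positive definite $R_k\in\mathbb R^{m\times m}$, $\Sigma_{w_k}\in\mathbb R^{n\times n}$ ($k=0,\dots,T-1$), $F,\Sigma_{x_{\mathrm{ini}}}\in\mathbb R^{n\times n}$. $\mathcal N(\mu,\Sigma)$ is the (possibly degenerate) Gaussian with $\Sigma\succeq0$. Cost for a policy $\pi=\{\pi_k\}$ (conditional distributions of $u_k$ given $x_k$) and prior $\rho=\{\rho_k\}$: $J(\pi,\rho)=\mathbb E\big[\sum_{k=0}^{T-1}\{\tfrac12 u_k^\top R_k u_k+\varepsilon D_{KL}(\pi_k(\cdot|x_k)\|\rho_k)\}+\tfrac12 x_T^\top F x_T\big]$ with $x_{k+1}=A_kx_k+B_ku_k+w_k$, $u_k\sim\pi_k(\cdot|x_k)$, $w_k\sim\mathcal N(0,\Sigma_{w_k})$ independent, $x_0\sim\mathcal N(0,\Sigma_{x_{\mathrm{ini}}})$.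 Let $\mathcal R^*=\{\rho:\rho_k=\mathcal N(0,\Sigma_{\rho_k}),\ \Sigma_{\rho_k}\succeq0\}$, identified with $(\mathbb S^m_{\succeq0})^T$ via the covariances. For $\rho\in\mathcal R^*$, $\pi^\rho$ denotes the (unique) minimizer of $J(\cdot,\rho)$ over policies and $\mathcal A(\rho)=\arg\min_{\rho^+\in\mathcal R^*}J(\pi^\rho,\rho^+)$. Explicitly: with $\Pi_T=F$, $C_k=(R_k+B_k^\top\Pi_{k+1}B_k)/\varepsilon$, $\Pi_k=A_k^\top\Pi_{k+1}A_k-\frac1\varepsilon A_k^\top\Pi_{k+1}B_k\Sigma_{\rho_k}^{1/2}(I+\Sigma_{\rho_k}^{1/2}C_k\Sigma_{\rho_k}^{1/2})^{-1}\Sigma_{\rho_k}^{1/2}B_k^\top\Pi_{k+1}A_k$, $\Sigma_{\pi_k}=\Sigma_{\rho_k}^{1/2}(I+\Sigma_{\rho_k}^{1/2}C_k\Sigma_{\rho_k}^{1/2})^{-1}\Sigma_{\rho_k}^{1/2}$, $P_k=-\frac1\varepsilon\Sigma_{\pi_k}B_k^\top\Pi_{k+1}A_k$, one has $\pi^\rho_k(\cdot|x)=\mathcal N(P_kx,\Sigma_{\pi_k})$; and with $\Sigma_{x_0}=\Sigma_{x_{\mathrm{ini}}}$, $\Sigma_{x_{k+1}}=(A_k+B_kP_k)\Sigma_{x_k}(A_k+B_kP_k)^\top+B_k\Sigma_{\pi_k}B_k^\top+\Sigma_{w_k}$, one has $\mathcal A(\rho)_k=\mathcal N(0,\Sigma_{\pi_k}+P_k\Sigma_{x_k}P_k^\top)$.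 *)

theory Defs
  imports "HOL-Analysis.Analysis"
begin

text \<open>Matrices: a p-by-q real matrix is \<open>real^'q^'p\<close> (rows indexed by 'p).
  Dimensions n (state) and m (input) are the type variables 'n and 'm.\<close>

definition psd_mat :: "real^'a^'a \<Rightarrow> bool" where
  "psd_mat M \<longleftrightarrow> transpose M = M \<and> (\<forall>x. 0 \<le> x \<bullet> (M *v x))"

definition pd_mat :: "real^'a^'a \<Rightarrow> bool" where
  "pd_mat M \<longleftrightarrow> transpose M = M \<and> (\<forall>x. x \<noteq> 0 \<longrightarrow> 0 < x \<bullet> (M *v x))"

definition msqrt :: "real^'a^'a \<Rightarrow> real^'a^'a" where
  "msqrt M = (THE S. psd_mat S \<and> S ** S = M)"

definition Cmat :: "real \<Rightarrow> real^'m^'m \<Rightarrow> real^'m^'n \<Rightarrow> real^'n^'n \<Rightarrow> real^'m^'m" where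
  "Cmat eps Rk Bk Pi1 = (1 / eps) *\<^sub>R (Rk + transpose Bk ** Pi1 ** Bk)"

definition Spi_of :: "real^'m^'m \<Rightarrow> real^'m^'m \<Rightarrow> real^'m^'m" where
  "Spi_of Srho C = msqrt Srho ** matrix_inv (mat 1 + msqrt Srho ** C ** msqrt Srho) ** msqrt Srho"

text \<open>Backward Riccati-type recursion: \<open>PiRev ... j = \<Pi>\<^sub>T\<^sub>-\<^sub>j\<close>.\<close>
primrec PiRev :: "real \<Rightarrow> nat \<Rightarrow> (nat \<Rightarrow> real^'n^'n) \<Rightarrow> (nat \<Rightarrow> real^'m^'n) \<Rightarrow>
    (nat \<Rightarrow> real^'m^'m) \<Rightarrow> real^'n^'n \<Rightarrow> (nat \<Rightarrow> real^'m^'m) \<Rightarrow> nat \<Rightarrow> real^'n^'n" where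
  "PiRev eps T A B R F Srho 0 = F"
| "PiRev eps T A B R F Srho (Suc j) =
     (let k = T - Suc j; P1 = PiRev eps T A B R F Srho j in
      transpose (A k) ** P1 ** A k
      - (1 / eps) *\<^sub>R (transpose (A k) ** P1 ** B k
            ** Spi_of (Srho k) (Cmat eps (R k) (B k) P1) ** transpose (B k) ** P1 ** A k))"

definition PiM :: "real \<Rightarrow> nat \<Rightarrow> (nat \<Rightarrow> real^'n^'n) \<Rightarrow> (nat \<Rightarrow> real^'m^'n) \<Rightarrow>
    (nat \<Rightarrow> real^'m^'m) \<Rightarrow> real^'n^'n \<Rightarrow> (nat \<Rightarrow> real^'m^'m) \<Rightarrow> nat \<Rightarrow> real^'n^'n" where
  "PiM eps T A B R F Srho k = PiRev eps T A B R F Srho (T - k)"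

text \<open>Policy covariance \<open>\<Sigma>\<^sub>\<pi>\<^sub>k\<close> and gain \<open>P\<^sub>k\<close> of \<open>\<pi>\<^sup>\<rho>\<close>.\<close>
definition SpiM :: "real \<Rightarrow> nat \<Rightarrow> (nat \<Rightarrow> real^'n^'n) \<Rightarrow> (nat \<Rightarrow> real^'m^'n) \<Rightarrow>
    (nat \<Rightarrow> real^'m^'m) \<Rightarrow> real^'n^'n \<Rightarrow> (nat \<Rightarrow> real^'m^'m) \<Rightarrow> nat \<Rightarrow> real^'m^'m" where
  "SpiM eps T A B R F Srho k =
     Spi_of (Srho k) (Cmat eps (R k) (B k) (PiM eps T A B R F Srho (Suc k)))"

definition PgainM :: "real \<Rightarrow> nat \<Rightarrow> (nat \<Rightarrow> real^'n^'n) \<Rightarrow> (nat \<Rightarrow> real^'m^'n) \<Rightarrow>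
    (nat \<Rightarrow> real^'m^'m) \<Rightarrow> real^'n^'n \<Rightarrow> (nat \<Rightarrow> real^'m^'m) \<Rightarrow> nat \<Rightarrow> real^'n^'m" where
  "PgainM eps T A B R F Srho k =
     - ((1 / eps) *\<^sub>R (SpiM eps T A B R F Srho k ** transpose (B k)
           ** PiM eps T A B R F Srho (Suc k) ** A k))"

text \<open>State covariances under \<open>\<pi>\<^sup>\<rho>\<close>.\<close>
primrec SxM :: "real \<Rightarrow> nat \<Rightarrow> (nat \<Rightarrow> real^'n^'n) \<Rightarrow> (nat \<Rightarrow> real^'m^'n) \<Rightarrow>
    (nat \<Rightarrow> real^'m^'m) \<Rightarrow> (nat \<Rightarrow> real^'n^'n) \<Rightarrow> real^'n^'n \<Rightarrow> real^'n^'n \<Rightarrow>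
    (nat \<Rightarrow> real^'m^'m) \<Rightarrow> nat \<Rightarrow> real^'n^'n" where
  "SxM eps T A B R Sw F Sxini Srho 0 = Sxini"
| "SxM eps T A B R Sw F Sxini Srho (Suc k) =
     (let Acl = A k + B k ** PgainM eps T A B R F Srho k in
      Acl ** SxM eps T A B R Sw F Sxini Srho k ** transpose Acl
      + B k ** SpiM eps T A B R F Srho k ** transpose (B k) + Sw k)"

text \<open>The update map \<open>\<A>\<close> on covariance tuples \<open>(\<Sigma>\<^sub>\<rho>\<^sub>k)\<^sub>k\<^sub><\<^sub>T\<close>
  (entries with \<open>k \<ge> T\<close> are irrelevant and set to 0).\<close>
definition Aop :: "real \<Rightarrow> nat \<Rightarrow> (nat \<Rightarrow> real^'n^'n) \<Rightarrow> (nat \<Rightarrow> real^'m^'n) \<Rightarrow>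
    (nat \<Rightarrow> real^'m^'m) \<Rightarrow> (nat \<Rightarrow> real^'n^'n) \<Rightarrow> real^'n^'n \<Rightarrow> real^'n^'n \<Rightarrow>
    (nat \<Rightarrow> real^'m^'m) \<Rightarrow> nat \<Rightarrow> real^'m^'m" where
  "Aop eps T A B R Sw F Sxini Srho k =
     (if k < T then
        SpiM eps T A B R F Srho k
        + PgainM eps T A B R F Srho k ** SxM eps T A B R Sw F Sxini Srho k
            ** transpose (PgainM eps T A B R F Srho k)
      else 0)"

definition cluster_point :: "nat \<Rightarrow> (nat \<Rightarrow> nat \<Rightarrow> real^'m^'m) \<Rightarrow> (nat \<Rightarrow> real^'m^'m) \<Rightarrow> bool" where
  "cluster_point T seq rho \<longleftrightarrow>
     (\<exists>r. strict_mono r \<and> (\<forall>k<T. (\<lambda>j. seq (r j) k) \<longlonglongrightarrow> rho k))"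

end

theory Submission
  imports Defs
begin


lemma transpose_add: "transpose (A + B) = transpose A + transpose (B::'a::semiring_1^'n^'m)"
  by (simp add: transpose_def vec_eq_iff)
lemma transpose_diff: "transpose (A - B) = transpose A - transpose (B::'a::ring_1^'n^'m)"
  by (simp add: transpose_def vec_eq_iff)
lemma transpose_uminus: "transpose (- A) = - transpose (A::'a::ring_1^'n^'m)"
  by (simp add: transpose_def vec_eq_iff)
lemma transpose_zero [simp]: "transpose (0::'a::semiring_1^'n^'m) = 0"
  by (simp add: transpose_def vec_eq_iff)

lemma matrix_add_rdistrib: "(A + B) ** C = A ** C + B ** (C::'a::semiring_1^'p^'n)"
  by (vector matrix_matrix_mult_def sum.distrib[symmetric] field_simps)
lemma matrix_diff_ldistrib: "A ** (B - C) = A ** B - A ** (C::'a::ring_1^'p^'n)"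
  by (vector matrix_matrix_mult_def sum_subtractf[symmetric] field_simps)
lemma matrix_diff_rdistrib: "(A - B) ** C = A ** C - B ** (C::'a::ring_1^'p^'n)"
  by (vector matrix_matrix_mult_def sum_subtractf[symmetric] field_simps)
lemma matrix_uminus_left: "(- A) ** C = - (A ** (C::'a::ring_1^'p^'n))"
  by (vector matrix_matrix_mult_def sum_negf[symmetric])
lemma matrix_uminus_right: "A ** (- C) = - (A ** (C::'a::ring_1^'p^'n))"
  by (vector matrix_matrix_mult_def sum_negf[symmetric])
lemma matrix_scaleR_left: "(c *\<^sub>R A) ** C = c *\<^sub>R (A ** (C::real^'p^'n))"
  by (simp add: scalar_matrix_assoc)
lemma matrix_scaleR_right: "A ** (c *\<^sub>R C) = c *\<^sub>R (A ** (C::real^'p^'n))"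
  by (simp add: matrix_scalar_ac scalar_matrix_assoc)
lemma matrix_zero_left [simp]: "(0::'a::semiring_1^'n^'m) ** A = 0" by simp
lemma mat1_mult_vec: "mat 1 *v x = x" by simp

lemmas mat_simps = matrix_add_ldistrib matrix_add_rdistrib matrix_diff_ldistrib matrix_diff_rdistrib
  matrix_uminus_left matrix_uminus_right matrix_scaleR_left matrix_scaleR_right
  transpose_add transpose_diff transpose_uminus transpose_scalar matrix_transpose_mul

lemma inner_matrix_transpose: "(x::real^'m) \<bullet> (A *v y) = (transpose A *v x) \<bullet> y"
  by (simp add: dot_lmul_matrix)

lemma inner_matrix_sym: "transpose A = A \<Longrightarrow> (x::real^'n) \<bullet> (A *v y) = y \<bullet> (A *v x)"
  by (metis inner_matrix_transpose inner_commute)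

lemma scaleR_mv: "(c *\<^sub>R A) *v x = c *\<^sub>R (A *v (x::real^'n))"
  by (vector matrix_vector_mult_def sum_distrib_left mult.assoc)

lemma quad_congr: "(x::real^'k) \<bullet> ((transpose X ** M ** X) *v x) = (X *v x) \<bullet> (M *v (X *v (x::real^'k)))"
proof -
  have "(transpose X ** M ** X) *v x = transpose X *v (M *v (X *v x))"
    by (simp add: matrix_vector_mul_assoc matrix_mul_assoc)
  then show ?thesis by (metis inner_matrix_transpose transpose_transpose inner_commute)
qed

lemma psd_matD: "psd_mat M \<Longrightarrow> 0 \<le> x \<bullet> (M *v x)" by (simp add: psd_mat_def)
lemma psd_sym: "psd_mat M \<Longrightarrow> transpose M = M" by (simp add: psd_mat_def)
lemma pd_sym: "pd_mat M \<Longrightarrow> transpose M = M" by (simp add: pd_mat_def)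
lemma pd_matD: "pd_mat M \<Longrightarrow> x \<noteq> 0 \<Longrightarrow> 0 < x \<bullet> (M *v x)" by (simp add: pd_mat_def)
lemma pd_psd: "pd_mat M \<Longrightarrow> psd_mat M"
  unfolding pd_mat_def psd_mat_def by (metis inner_zero_left less_le matrix_vector_mult_0_right order_refl)

lemma psd_add: "psd_mat A \<Longrightarrow> psd_mat B \<Longrightarrow> psd_mat (A + B)"
  by (simp add: psd_mat_def transpose_add matrix_vector_mult_add_rdistrib inner_add_right)
lemma pd_add_psd: "pd_mat A \<Longrightarrow> psd_mat B \<Longrightarrow> pd_mat (A + B)"
  unfolding pd_mat_def psd_mat_def
  by (simp add: transpose_add matrix_vector_mult_add_rdistrib inner_add_right add_pos_nonneg)
lemma psd_pd_add: "psd_mat A \<Longrightarrow> pd_mat B \<Longrightarrow> pd_mat (A + B)"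
  by (metis add.commute pd_add_psd)
lemma psd_scaleR: "psd_mat A \<Longrightarrow> 0 \<le> c \<Longrightarrow> psd_mat (c *\<^sub>R A)"
  by (simp add: psd_mat_def transpose_scalar scaleR_mv)
lemma pd_scaleR: "pd_mat A \<Longrightarrow> 0 < c \<Longrightarrow> pd_mat (c *\<^sub>R A)"
  by (simp add: pd_mat_def transpose_scalar scaleR_mv)
lemma psd_zero: "psd_mat 0"
  by (simp add: psd_mat_def)
lemma pd_one: "pd_mat (mat 1)"
  by (simp add: pd_mat_def)
lemma psd_one: "psd_mat (mat 1)"
  by (simp add: pd_psd pd_one)

lemma psd_congr: "psd_mat M \<Longrightarrow> psd_mat (transpose X ** M ** (X::real^'k^'n))"
  unfolding psd_mat_def quad_congr
  by (simp add: matrix_transpose_mul matrix_mul_assoc)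

lemma psd_congr': "psd_mat M \<Longrightarrow> psd_mat (X ** M ** transpose (X::real^'n^'k))"
  using psd_congr[of M "transpose X"] by simp

lemma pd_congr:
  assumes "pd_mat M" and "\<And>v. X *v v = 0 \<Longrightarrow> v = 0"
  shows "pd_mat (transpose X ** M ** (X::real^'k^'n))"
  using assms unfolding pd_mat_def quad_congr
  by (simp add: matrix_transpose_mul matrix_mul_assoc) blast

lemma invertible_inv:
  assumes "invertible (A::'a::semiring_1^'n^'m)"
  shows "A ** matrix_inv A = mat 1" "matrix_inv A ** A = mat 1"
proof -
  have "\<exists>A'. A ** A' = mat 1 \<and> A' ** A = mat 1" using assms by (simp add: invertible_def)
  then have "A ** matrix_inv A = mat 1 \<and> matrix_inv A ** A = mat 1"
    unfolding matrix_inv_def by (rule someI_ex)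
  then show "A ** matrix_inv A = mat 1" "matrix_inv A ** A = mat 1" by auto
qed

lemma invertible_left:
  fixes A :: "real^'n^'n"
  shows "B ** A = mat 1 \<Longrightarrow> invertible A"
  by (meson invertible_def matrix_left_right_inverse)

lemma inv_unique:
  fixes A :: "real^'n^'n"
  shows "B ** A = mat 1 \<Longrightarrow> matrix_inv A = B"
  by (metis invertible_inv(1) invertible_left matrix_mul_assoc matrix_mul_lid matrix_mul_rid)

lemma inv_unique_right:
  fixes A :: "real^'n^'n"
  shows "A ** B = mat 1 \<Longrightarrow> matrix_inv A = B"
  by (metis inv_unique matrix_left_right_inverse)

lemma invertible_inj:
  fixes A :: "real^'n^'n"
  assumes "\<And>v. A *v v = 0 \<Longrightarrow> v = 0"
  shows "invertible A"
proof -
  have "inj ((*v) A)"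
    by (metis (no_types, lifting) assms diff_zero eq_iff_diff_eq_0 injI matrix_vector_mult_diff_distrib)
  then show ?thesis
    using det_nz_iff_inj[of "(*v) A"] by (simp add: invertible_det_nz)
qed

lemma invertible_imp_inj: "invertible (A::real^'n^'n) \<Longrightarrow> A *v v = 0 \<Longrightarrow> v = 0"
  by (metis invertible_inv(2) matrix_vector_mul_assoc matrix_vector_mul_lid matrix_vector_mult_0_right)

lemma pd_invertible: "pd_mat (A::real^'n^'n) \<Longrightarrow> invertible A"
  by (metis inner_zero_right invertible_inj less_irrefl pd_matD)

lemma inv_transpose: "invertible (A::real^'n^'n) \<Longrightarrow> matrix_inv (transpose A) = transpose (matrix_inv A)"
  by (metis inv_unique invertible_inv(1) matrix_transpose_mul transpose_mat)

lemma invertible_matrix_inv: "invertible (A::real^'n^'n) \<Longrightarrow> invertible (matrix_inv A)"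
  by (meson invertible_def invertible_inv)

lemma inv_inv: "invertible (A::real^'n^'n) \<Longrightarrow> matrix_inv (matrix_inv A) = A"
  by (simp add: inv_unique invertible_inv(1))

lemma inv_mult: "invertible (A::real^'n^'n) \<Longrightarrow> invertible (B::real^'n^'n) \<Longrightarrow> matrix_inv (A ** B) = matrix_inv B ** matrix_inv A"
  apply (rule inv_unique)
  by (metis (no_types, lifting) invertible_inv(2) matrix_mul_assoc matrix_mul_lid)

lemma sym_inv: "transpose A = A \<Longrightarrow> invertible (A::real^'n^'n) \<Longrightarrow> transpose (matrix_inv A) = matrix_inv A"
  by (metis inv_transpose)

lemma pd_inv: "pd_mat (A::real^'n^'n) \<Longrightarrow> pd_mat (matrix_inv A)"
proof -
  assume A: "pd_mat A"
  then have inv: "invertible A" by (rule pd_invertible)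
  have s: "transpose (matrix_inv A) = matrix_inv A" using A inv pd_sym sym_inv by blast
  have "transpose (matrix_inv A) ** A ** matrix_inv A = matrix_inv A"
    by (simp add: s inv invertible_inv matrix_mul_assoc[symmetric])
  moreover have "pd_mat (transpose (matrix_inv A) ** A ** matrix_inv A)"
    by (rule pd_congr[OF A]) (metis inv invertible_imp_inj invertible_matrix_inv)
  ultimately show ?thesis by simp
qed

lemma mv_axis: "(A *v axis j 1) $ i = (A::real^'n^'m) $ i $ j"
  by (simp add: matrix_vector_mult_def axis_def if_distrib if_distribR sum.delta cong: if_cong)

lemma quad_axis: "axis i 1 \<bullet> ((A::real^'n^'n) *v axis i 1) = A $ i $ i"
  by (simp add: inner_axis' mv_axis)

lemma trace_transpose: "trace (transpose A) = trace (A::'a::semiring_1^'n^'n)"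
  by (simp add: trace_def transpose_def)
lemma trace_scaleR: "trace (c *\<^sub>R A) = c * trace (A::real^'n^'n)"
  by (simp add: trace_def sum_distrib_left)
lemma trace_uminus: "trace (- A) = - trace (A::real^'n^'n)"
  by (simp add: trace_def sum_negf)

lemma trace_psd_nonneg: "psd_mat (A::real^'n^'n) \<Longrightarrow> 0 \<le> trace A"
proof -
  assume "psd_mat A"
  then have "\<And>i. 0 \<le> axis i 1 \<bullet> (A *v axis i 1)" by (simp add: psd_matD)
  then have "\<And>i. 0 \<le> A $ i $ i"
    by (simp add: quad_axis)
  then show ?thesis by (simp add: trace_def sum_nonneg)
qed



lemma tendsto_matmul:
  fixes f :: "'x \<Rightarrow> real^'n^'m" and g :: "'x \<Rightarrow> real^'p^'n"
  assumes "(f \<longlongrightarrow> A) F" "(g \<longlongrightarrow> B) F"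
  shows "((\<lambda>x. f x ** g x) \<longlongrightarrow> A ** B) F"
  unfolding matrix_matrix_mult_def
  apply (rule tendsto_vec_lambda) apply (rule tendsto_vec_lambda)
  apply (rule tendsto_sum) apply (rule tendsto_mult)
  apply (rule tendsto_vec_nth)+ apply (rule assms)
  apply (rule tendsto_vec_nth)+ apply (rule assms)
  done

lemma tendsto_det:
  fixes f :: "'x \<Rightarrow> real^'n^'n"
  assumes "(f \<longlongrightarrow> A) F"
  shows "((\<lambda>x. det (f x)) \<longlongrightarrow> det A) F"
  unfolding det_def
  apply (rule tendsto_sum) apply (rule tendsto_mult) apply (rule tendsto_const)
  apply (rule tendsto_prod) apply (rule tendsto_vec_nth)+ apply (rule assms)
  done
lemma tendsto_transpose:
  fixes f :: "'x \<Rightarrow> real^'n^'m"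
  assumes "(f \<longlongrightarrow> A) F"
  shows "((\<lambda>x. transpose (f x)) \<longlongrightarrow> transpose A) F"
  unfolding transpose_def
  apply (rule tendsto_vec_lambda) apply (rule tendsto_vec_lambda)
  apply (rule tendsto_vec_nth)+ apply (rule assms)
  done
lemma tendsto_cramer:
  fixes f :: "'x \<Rightarrow> real^'n^'n"
  assumes "(f \<longlongrightarrow> A) F" "det A \<noteq> 0"
  shows "((\<lambda>x. (\<chi> i j. det (\<chi> r c. if c = i then axis j 1 $ r else f x $ r $ c) / det (f x))
          :: real^'n^'n) \<longlongrightarrow> (\<chi> i j. det (\<chi> r c. if c = i then axis j 1 $ r else A $ r $ c) / det A)) F"
  apply (rule tendsto_vec_lambda) apply (rule tendsto_vec_lambda)
  apply (rule tendsto_divide)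
  subgoal for i j
    apply (rule tendsto_det)
    apply (rule tendsto_vec_lambda) apply (rule tendsto_vec_lambda)
    subgoal for r c by (cases "c = i") (auto intro!: tendsto_vec_nth assms)
    done
  using assms by (auto intro: tendsto_det)


lemma matrix_inv_cramer:
  fixes A :: "real^'n^'n"
  assumes "invertible A"
  shows "matrix_inv A = (\<chi> i j. det (\<chi> r c. if c = i then axis j 1 $ r else A $ r $ c) / det A)"
proof -
  have d: "det A \<noteq> 0" using assms invertible_det_nz by blast
  have "\<And>j. A *v (matrix_inv A *v axis j 1) = axis j 1"
    by (simp add: matrix_vector_mul_assoc invertible_inv assms)
  then have "\<And>j. matrix_inv A *v axis j 1 = (\<chi> k. det (\<chi> r c. if c = k then axis j 1 $ r else A $ r $ c) / det A)"
    by (rule cramer[OF d, THEN iffD1])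
  then have "\<And>i j. matrix_inv A $ i $ j = det (\<chi> r c. if c = i then axis j 1 $ r else A $ r $ c) / det A"
    by (simp add: mv_axis[symmetric])
  then show ?thesis by (simp add: vec_eq_iff)
qed

lemma tendsto_matrix_inv:
  fixes f :: "'x \<Rightarrow> real^'n^'n"
  assumes "(f \<longlongrightarrow> A) F" "invertible A"
  shows "((\<lambda>x. matrix_inv (f x)) \<longlongrightarrow> matrix_inv A) F"
proof -
  have d: "det A \<noteq> 0" using assms invertible_det_nz by blast
  have ev: "\<forall>\<^sub>F x in F. det (f x) \<noteq> 0"
    using tendsto_det[OF assms(1)] d by (simp add: tendsto_imp_eventually_ne)
  have "((\<lambda>x. (\<chi> i j. det (\<chi> r c. if c = i then axis j 1 $ r else f x $ r $ c) / det (f x))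
          :: real^'n^'n) \<longlongrightarrow> (\<chi> i j. det (\<chi> r c. if c = i then axis j 1 $ r else A $ r $ c) / det A)) F"
    by (rule tendsto_cramer[OF assms(1) d])
  then have "((\<lambda>x. (\<chi> i j. det (\<chi> r c. if c = i then axis j 1 $ r else f x $ r $ c) / det (f x))
          :: real^'n^'n) \<longlongrightarrow> matrix_inv A) F"
    by (simp add: matrix_inv_cramer assms)
  then show ?thesis
    apply (rule Lim_transform_eventually)
    using ev by eventually_elim (simp add: matrix_inv_cramer invertible_det_nz)
qed

lemma tendsto_mv:
  fixes f :: "'x \<Rightarrow> real^'n^'m"
  assumes "(f \<longlongrightarrow> A) F"
  shows "((\<lambda>x. f x *v v) \<longlongrightarrow> A *v v) F"
  unfolding matrix_vector_mult_def
  apply (rule tendsto_vec_lambda) apply (rule tendsto_sum) apply (rule tendsto_mult)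
  apply (rule tendsto_vec_nth)+ apply (rule assms) apply (rule tendsto_const) done

lemma psd_closed:
  fixes f :: "nat \<Rightarrow> real^'n^'n"
  assumes "f \<longlonglongrightarrow> A" "\<And>j. psd_mat (f j)"
  shows "psd_mat A"
proof -
  have "(\<lambda>j. transpose (f j)) \<longlonglongrightarrow> transpose A" by (rule tendsto_transpose[OF assms(1)])
  moreover have "(\<lambda>j. transpose (f j)) = f" using assms(2) psd_sym by auto
  ultimately have "f \<longlonglongrightarrow> transpose A" by simp
  then have s: "transpose A = A" using assms(1) LIMSEQ_unique by blast
  have "\<And>x. (\<lambda>j. x \<bullet> (f j *v x)) \<longlonglongrightarrow> x \<bullet> (A *v x)"
    by (rule tendsto_inner[OF tendsto_const tendsto_mv[OF assms(1)]])
  then have "\<And>x. 0 \<le> x \<bullet> (A *v x)"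
    by (meson LIMSEQ_le_const assms(2) psd_matD)
  then show ?thesis using s by (simp add: psd_mat_def)
qed



section \<open>Spectral theorem\<close>

definition diag_mat :: "real^'n \<Rightarrow> real^'n^'n" where
  "diag_mat d = (\<chi> i j. if i = j then d $ i else 0)"

lemma quad_expand:
  fixes A :: "real^'n^'n"
  assumes sym: "transpose A = A"
  shows "(b + t *\<^sub>R w) \<bullet> (A *v (b + t *\<^sub>R w)) =
         b \<bullet> (A *v b) + 2 * t * (w \<bullet> (A *v b)) + t^2 * (w \<bullet> (A *v w))"
proof -
  have "b \<bullet> (A *v w) = w \<bullet> (A *v b)" using inner_matrix_sym[OF sym] by blast
  then show ?thesis
    by (simp add: matrix_vector_right_distrib matrix_vector_mult_scaleR inner_add_left inner_add_right
        power2_eq_square algebra_simps)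
qed

lemma quad_lin_zero:
  fixes a k :: real
  assumes "\<And>t. 2 * t * a + t^2 * k \<le> 0"
  shows "a = 0"
proof (rule ccontr)
  assume a: "a \<noteq> 0"
  define s where "s = \<bar>k\<bar> + 1"
  define t where "t = a / s"
  have p: "s > 0" unfolding s_def by simp
  have "2 * t * a + t^2 * k = a^2 / s^2 * (2 * s + k)"
    unfolding t_def using p by (simp add: field_simps power2_eq_square)
  moreover have "a^2 / s^2 > 0" using a p by simp
  moreover have "2 * s + k > 0" unfolding s_def by (cases "k \<ge> 0") auto
  ultimately have "2 * t * a + t^2 * k > 0" by (metis mult_pos_pos)
  with assms[of t] show False by simp
qed

lemma quad_homog: "(c *\<^sub>R x) \<bullet> (A *v (c *\<^sub>R x)) = c^2 * (x \<bullet> ((A::real^'n^'n) *v x))"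
  by (simp add: matrix_vector_mult_scaleR power2_eq_square)

lemma max_eigvec:
  fixes A :: "real^'n^'n"
  assumes sym: "transpose A = A" and V: "subspace V" and inv: "\<forall>x\<in>V. A *v x \<in> V"
    and b: "b \<in> V" "norm b = 1"
    and max: "\<forall>y\<in>V \<inter> sphere 0 1. y \<bullet> (A *v y) \<le> b \<bullet> (A *v b)"
  shows "A *v b = (b \<bullet> (A *v b)) *\<^sub>R b"
proof -
  define l where "l = b \<bullet> (A *v b)"
  have bb: "b \<bullet> b = 1" using b by (simp add: dot_square_norm)
  have key: "w \<bullet> (A *v b) = 0" if w: "w \<in> V" "w \<bullet> b = 0" for w
  proof -
    have "2 * t * (w \<bullet> (A *v b)) + t^2 * (w \<bullet> (A *v w) - l * (w \<bullet> w)) \<le> 0" for t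
    proof -
      define y where "y = b + t *\<^sub>R w"
      have yy: "y \<bullet> y = 1 + t^2 * (w \<bullet> w)"
        unfolding y_def using w bb by (simp add: inner_add_left inner_add_right inner_commute power2_eq_square)
      have "0 < y \<bullet> y" using yy by (simp add: add_pos_nonneg)
      then have yn: "norm y > 0" by (simp add: inner_gt_zero_iff)
      have yV: "y \<in> V" unfolding y_def using V b w by (simp add: subspace_add subspace_scale)
      have "(inverse (norm y)) *\<^sub>R y \<in> V \<inter> sphere 0 1"
        using yV yn V by (simp add: subspace_scale)
      then have "((inverse (norm y)) *\<^sub>R y) \<bullet> (A *v ((inverse (norm y)) *\<^sub>R y)) \<le> l"
        using max l_def by blast
      then have "(inverse (norm y))^2 * (y \<bullet> (A *v y)) \<le> l" by (simp only: quad_homog)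
      then have "y \<bullet> (A *v y) \<le> l * (norm y)^2"
        using yn by (simp add: field_simps power2_eq_square)
      also have "(norm y)^2 = y \<bullet> y" by (simp add: power2_norm_eq_inner)
      finally have "y \<bullet> (A *v y) \<le> l * (1 + t^2 * (w \<bullet> w))" using yy by simp
      then show ?thesis unfolding y_def quad_expand[OF sym] l_def by (simp add: algebra_simps)
    qed
    then show ?thesis by (rule quad_lin_zero)
  qed
  define r where "r = A *v b - l *\<^sub>R b"
  have rV: "r \<in> V" unfolding r_def using V b inv by (simp add: subspace_diff subspace_scale)
  have Abb: "(A *v b) \<bullet> b = l" unfolding l_def by (rule inner_commute)
  have rb: "r \<bullet> b = 0" unfolding r_def by (simp add: inner_diff_left bb Abb)
  have "r \<bullet> (A *v b) = 0" using key rV rb by blast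
  moreover have "r \<bullet> (A *v b - l *\<^sub>R b) = r \<bullet> (A *v b) - l * (r \<bullet> b)"
    by (simp add: inner_diff_right)
  moreover have "A *v b - l *\<^sub>R b = r" by (simp add: r_def)
  ultimately have "r \<bullet> r = 0" using rb by simp
  then have "r = 0" by simp
  then show ?thesis unfolding r_def l_def by simp
qed

lemma eig_basis_sub:
  fixes A :: "real^'n^'n"
  assumes sym: "transpose A = A"
  shows "subspace V \<Longrightarrow> (\<forall>x\<in>V. A *v x \<in> V) \<Longrightarrow> dim V = n \<Longrightarrow>
    \<exists>B. B \<subseteq> V \<and> finite B \<and> card B = n \<and> (\<forall>b\<in>B. norm b = 1 \<and> (\<exists>c. A *v b = c *\<^sub>R b))
       \<and> (\<forall>b\<in>B. \<forall>b'\<in>B. b \<noteq> b' \<longrightarrow> b \<bullet> b' = 0)"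
proof (induction n arbitrary: V)
  case 0
  then show ?case by (intro exI[of _ "{}"]) simp
next
  case (Suc n)
  have V: "subspace V" and inv: "\<forall>x\<in>V. A *v x \<in> V" and d: "dim V = Suc n" using Suc.prems by auto
  obtain v where v: "v \<in> V" "v \<noteq> 0" using d by (metis dim_eq_0 nat.distinct(1) singletonI subsetI)
  define K where "K = V \<inter> sphere (0::real^'n) 1"
  have Kc: "compact K" unfolding K_def
    by (simp add: V closed_subspace closed_Int_compact)
  have "inverse (norm v) *\<^sub>R v \<in> K" unfolding K_def using v V by (simp add: subspace_scale)
  then have Kne: "K \<noteq> {}" by auto
  have cont: "continuous_on K (\<lambda>x. x \<bullet> (A *v x))"
    by (intro continuous_intros linear_continuous_on matrix_vector_mul_linear[THEN linear_conv_bounded_linear[THEN iffD1]])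
  obtain b where bK: "b \<in> K" and bmax: "\<forall>y\<in>K. y \<bullet> (A *v y) \<le> b \<bullet> (A *v b)"
    using continuous_attains_sup[OF Kc Kne cont] by blast
  have bV: "b \<in> V" and bn: "norm b = 1" using bK unfolding K_def by auto
  define c where "c = b \<bullet> (A *v b)"
  have eig: "A *v b = c *\<^sub>R b"
    unfolding c_def by (rule max_eigvec[OF sym V inv bV bn]) (use bmax K_def in auto)
  have bb: "b \<bullet> b = 1" using bn by (simp add: dot_square_norm)
  define V' where "V' = {x \<in> V. b \<bullet> x = 0}"
  have V'eq: "V' = V \<inter> {x. b \<bullet> x = 0}" unfolding V'_def by auto
  have sub': "subspace V'" unfolding V'eq
  proof (rule subspace_inter[OF V])
    show "subspace {x. b \<bullet> x = 0}"
      using subspace_orthogonal_to_vector[of b] by (simp add: orthogonal_def)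
  qed
  have inv': "\<forall>x\<in>V'. A *v x \<in> V'"
  proof
    fix x assume x: "x \<in> V'"
    have "b \<bullet> (A *v x) = x \<bullet> (A *v b)" using inner_matrix_sym[OF sym] by blast
    also have "\<dots> = c * (b \<bullet> x)" by (simp add: eig inner_commute)
    also have "\<dots> = 0" using x V'_def by simp
    finally show "A *v x \<in> V'" using x inv V'_def by auto
  qed
  have bnot: "b \<notin> V'" using bb V'_def by auto
  have span_eq: "span (insert b V') = V"
  proof
    show "span (insert b V') \<subseteq> V"
      by (rule span_minimal) (use V bV V'_def in auto)
    show "V \<subseteq> span (insert b V')"
    proof
      fix x assume x: "x \<in> V"
      have "x - (b \<bullet> x) *\<^sub>R b \<in> V'"
        unfolding V'_def using x bV V bb by (simp add: subspace_diff subspace_scale inner_diff_right)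
      then have "x - (b \<bullet> x) *\<^sub>R b \<in> span (insert b V')" by (simp add: span_base)
      moreover have "(b \<bullet> x) *\<^sub>R b \<in> span (insert b V')" by (simp add: span_base span_scale)
      ultimately have "(x - (b \<bullet> x) *\<^sub>R b) + (b \<bullet> x) *\<^sub>R b \<in> span (insert b V')" by (rule span_add)
      then show "x \<in> span (insert b V')" by simp
    qed
  qed
  have spV': "span V' = V'" using sub' by (rule span_eq_iff[THEN iffD2])
  have "dim V = dim (span (insert b V'))" using span_eq by simp
  also have "\<dots> = dim (insert b V')" by (rule dim_span)
  also have "\<dots> = dim V' + 1"
  proof -
    have bsp: "b \<notin> span V'" unfolding spV' by (rule bnot)
    then show ?thesis by (simp add: dim_insert)
  qed
  finally have dV': "dim V' = n" using d by simp
  obtain B' where B': "B' \<subseteq> V'" "finite B'" "card B' = n" "\<forall>b\<in>B'. norm b = 1 \<and> (\<exists>c. A *v b = c *\<^sub>R b)"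
      "\<forall>b\<in>B'. \<forall>b'\<in>B'. b \<noteq> b' \<longrightarrow> b \<bullet> b' = 0"
    using Suc.IH[OF sub' inv' dV'] by blast
  have bB': "b \<notin> B'" using B'(1) bnot by blast
  show ?case
  proof (intro exI[of _ "insert b B'"] conjI)
    show "insert b B' \<subseteq> V" using B'(1) bV V'_def by auto
    show "finite (insert b B')" using B'(2) by simp
    show "card (insert b B') = Suc n" using B'(2,3) bB' by simp
    show "\<forall>x\<in>insert b B'. norm x = 1 \<and> (\<exists>c. A *v x = c *\<^sub>R x)" using B'(4) bn eig by auto
    show "\<forall>x\<in>insert b B'. \<forall>y\<in>insert b B'. x \<noteq> y \<longrightarrow> x \<bullet> y = 0"
      using B'(1,5) V'_def by (auto simp: inner_commute)
  qed
qed


lemma diag_transpose [simp]: "transpose (diag_mat d) = diag_mat d"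
  by (simp add: diag_mat_def transpose_def vec_eq_iff)

lemma diag_mult_entry: "(diag_mat a ** diag_mat b) $ i $ j = (if i = j then a $ i * b $ i else 0)"
proof -
  have "(diag_mat a ** diag_mat b) $ i $ j = (\<Sum>k\<in>UNIV. (if k = i then a $ i * (if k = j then b $ k else 0) else 0))"
    unfolding diag_mat_def matrix_matrix_mult_def vec_lambda_beta by (rule sum.cong) auto
  also have "\<dots> = a $ i * (if i = j then b $ i else 0)" by (simp add: sum.delta)
  finally show ?thesis by simp
qed
lemma diag_mult: "diag_mat a ** diag_mat b = diag_mat (a * b)"
  by (simp add: vec_eq_iff diag_mult_entry) (simp add: diag_mat_def)

lemma diag_mv: "diag_mat d *v y = (\<chi> i. d $ i * y $ i)"
  by (simp add: diag_mat_def matrix_vector_mult_def vec_eq_iff if_distrib if_distribR sum.delta cong: if_cong)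

lemma diag_det: "det (diag_mat d) = prod (\<lambda>i. d $ i) UNIV"
  by (subst det_diagonal) (auto simp: diag_mat_def)

lemma diag_trace: "trace (diag_mat d) = sum (\<lambda>i. d $ i) UNIV"
  by (simp add: trace_def diag_mat_def)

lemma diag_quad: "y \<bullet> (diag_mat d *v y) = (\<Sum>i\<in>UNIV. d $ i * (y $ i)^2)"
  by (simp add: diag_mv inner_vec_def power2_eq_square mult_ac)

theorem spectral:
  fixes A :: "real^'n^'n"
  assumes sym: "transpose A = A"
  obtains Q :: "real^'n^'n" and d where "transpose Q ** Q = mat 1" "Q ** transpose Q = mat 1"
    "A = Q ** diag_mat d ** transpose Q"
proof -
  have dimU: "dim (UNIV::(real^'n) set) = CARD('n)" by simp
  obtain B where B: "finite B" "card B = CARD('n)" "\<forall>b\<in>B. norm b = 1 \<and> (\<exists>c. A *v b = c *\<^sub>R b)"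
       "\<forall>b\<in>B. \<forall>b'\<in>B. b \<noteq> b' \<longrightarrow> b \<bullet> b' = 0"
    using eig_basis_sub[OF sym subspace_UNIV _ dimU] by auto
  obtain g where g: "bij_betw g (UNIV::'n set) B"
    using finite_same_card_bij[of "UNIV::'n set" B] B(1,2) by auto
  have gB: "g j \<in> B" for j using g by (auto simp: bij_betw_def)
  have ginj: "g i = g j \<Longrightarrow> i = j" for i j using g by (simp add: bij_betw_def inj_def)
  define ev where "ev b = (SOME c. A *v b = c *\<^sub>R b)" for b
  have ev: "A *v g j = ev (g j) *\<^sub>R g j" for j
    unfolding ev_def using B(3) gB[of j] by (metis (mono_tags, lifting) someI_ex)
  define Q :: "real^'n^'n" where "Q = (\<chi> i j. g j $ i)"
  define d :: "real^'n" where "d = (\<chi> j. ev (g j))"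
  have gg: "g i \<bullet> g j = (if i = j then 1 else 0)" for i j
  proof (cases "i = j")
    case True
    then show ?thesis using B(3) gB[of j] by (simp add: dot_square_norm)
  next
    case False
    then have "g i \<noteq> g j" using ginj by blast
    then show ?thesis using B(4) gB False by auto
  qed
  have QQ: "transpose Q ** Q = mat 1"
    using gg by (simp add: Q_def transpose_def matrix_matrix_mult_def mat_def vec_eq_iff inner_vec_def)
  then have QQ': "Q ** transpose Q = mat 1" by (rule matrix_left_right_inverse[THEN iffD1])
  have AQ: "A ** Q = Q ** diag_mat d"
  proof -
    have "(A ** Q) $ i $ j = (Q ** diag_mat d) $ i $ j" for i j
    proof -
      have "(A ** Q) $ i $ j = (A *v g j) $ i"
        by (simp add: Q_def matrix_matrix_mult_def matrix_vector_mult_def)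
      also have "\<dots> = ev (g j) * g j $ i" by (simp add: ev)
      also have "\<dots> = (Q ** diag_mat d) $ i $ j"
        by (simp add: Q_def d_def diag_mat_def matrix_matrix_mult_def if_distrib if_distribR sum.delta cong: if_cong)
      finally show ?thesis .
    qed
    then show ?thesis by (simp add: vec_eq_iff)
  qed
  have "A = A ** (Q ** transpose Q)" by (simp add: QQ')
  also have "\<dots> = Q ** diag_mat d ** transpose Q" by (simp add: matrix_mul_assoc AQ)
  finally have "A = Q ** diag_mat d ** transpose Q" .
  then show ?thesis by (rule that[OF QQ QQ'])
qed

lemma quad_spectral:
  "x \<bullet> ((Q ** diag_mat d ** transpose Q) *v x) = (\<Sum>i\<in>UNIV. d $ i * ((transpose Q *v x) $ i)^2)"
proof -
  have "x \<bullet> ((Q ** diag_mat d ** transpose Q) *v x) = (transpose Q *v x) \<bullet> (diag_mat d *v (transpose Q *v x))"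
    using quad_congr[of x "transpose Q" "diag_mat d"] by (simp only: transpose_transpose)
  then show ?thesis by (simp only: diag_quad)
qed

lemma orth_norm:
  assumes "Q ** transpose Q = mat 1"
  shows "(transpose Q *v x) \<bullet> (transpose Q *v x) = x \<bullet> (x::real^'n)"
proof -
  have "(transpose Q *v x) \<bullet> (transpose Q *v x) = x \<bullet> (Q *v (transpose Q *v x))"
    by (rule inner_matrix_transpose[of x Q, symmetric])
  also have "Q *v (transpose Q *v x) = x"
    by (simp only: matrix_vector_mul_assoc assms matrix_vector_mul_lid)
  finally show ?thesis .
qed

lemma orth_axis:
  assumes "transpose Q ** Q = mat 1"
  shows "transpose Q *v (Q *v axis i 1) = (axis i 1 :: real^'n)"
  by (simp add: matrix_vector_mul_assoc assms)

lemma spectral_eig_quad: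
  assumes "transpose Q ** Q = mat 1"
  shows "(Q *v axis i 1) \<bullet> ((Q ** diag_mat d ** transpose Q) *v (Q *v axis i 1)) = d $ i"
  unfolding quad_spectral orth_axis[OF assms]
  by (simp add: axis_def if_distrib if_distribR sum.delta cong: if_cong)

lemma Q_axis_nz:
  assumes "transpose Q ** Q = mat 1"
  shows "Q *v axis i 1 \<noteq> (0::real^'n)"
  using orth_axis[OF assms, of i] by (metis axis_eq_0_iff matrix_vector_mult_0_right zero_neq_one)

lemma spectral_psd:
  fixes S :: "real^'n^'n"
  assumes "psd_mat S"
  obtains Q :: "real^'n^'n" and d where "transpose Q ** Q = mat 1" "Q ** transpose Q = mat 1"
    "S = Q ** diag_mat d ** transpose Q" "\<forall>i. d $ i \<ge> 0"
proof -
  obtain Q :: "real^'n^'n" and d where Q: "transpose Q ** Q = mat 1" "Q ** transpose Q = mat 1" "S = Q ** diag_mat d ** transpose Q"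
    by (rule spectral[OF psd_sym[OF assms]])
  have dpos: "d $ i \<ge> 0" for i
  proof -
    have "0 \<le> (Q *v axis i 1) \<bullet> (S *v (Q *v axis i 1))" by (rule psd_matD[OF assms])
    also have "\<dots> = d $ i" unfolding Q(3) by (rule spectral_eig_quad[OF Q(1)])
    finally show ?thesis .
  qed
  have "\<forall>i. d $ i \<ge> 0" using dpos by blast
  then show ?thesis by (rule that[OF Q(1) Q(2) Q(3)])
qed

lemma spectral_pd:
  fixes S :: "real^'n^'n"
  assumes "pd_mat S"
  obtains Q :: "real^'n^'n" and d where "transpose Q ** Q = mat 1" "Q ** transpose Q = mat 1"
    "S = Q ** diag_mat d ** transpose Q" "\<forall>i. d $ i > 0"
proof -
  obtain Q :: "real^'n^'n" and d where Q: "transpose Q ** Q = mat 1" "Q ** transpose Q = mat 1" "S = Q ** diag_mat d ** transpose Q"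
    by (rule spectral[OF pd_sym[OF assms]])
  have dpos: "d $ i > 0" for i
  proof -
    have "0 < (Q *v axis i 1) \<bullet> (S *v (Q *v axis i 1))" by (rule pd_matD[OF assms Q_axis_nz[OF Q(1)]])
    also have "\<dots> = d $ i" unfolding Q(3) by (rule spectral_eig_quad[OF Q(1)])
    finally show ?thesis .
  qed
  have "\<forall>i. d $ i > 0" using dpos by blast
  then show ?thesis by (rule that[OF Q(1) Q(2) Q(3)])
qed

lemma det_spectral:
  fixes Q :: "real^'n^'n"
  assumes "Q ** transpose Q = mat 1"
  shows "det (Q ** diag_mat d ** transpose Q) = prod (\<lambda>i. d $ i) UNIV"
proof -
  have "det Q * det (transpose Q) = 1" using assms by (metis det_I det_mul)
  then show ?thesis by (simp add: det_mul diag_det)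
qed

lemma trace_spectral:
  assumes "transpose Q ** Q = mat 1"
  shows "trace (Q ** diag_mat d ** transpose Q) = sum (\<lambda>i. d $ i) UNIV"
proof -
  have "trace (Q ** diag_mat d ** transpose Q) = trace (diag_mat d ** transpose Q ** Q)"
    by (metis trace_mul_sym matrix_mul_assoc)
  also have "\<dots> = trace (diag_mat d)" by (simp add: assms matrix_mul_assoc[symmetric])
  finally show ?thesis by (simp add: diag_trace)
qed

section \<open>Square roots\<close>

lemma psd_sqrt_exists:
  fixes S :: "real^'n^'n"
  assumes "psd_mat S"
  shows "\<exists>X. psd_mat X \<and> X ** X = S"
proof -
  obtain Q :: "real^'n^'n" and d where Q: "transpose Q ** Q = mat 1" "Q ** transpose Q = mat 1"
    "S = Q ** diag_mat d ** transpose Q" "\<forall>i. d $ i \<ge> 0"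
    using spectral_psd[OF assms] by blast
  define e :: "real^'n" where "e = (\<chi> i. sqrt (d $ i))"
  define X where "X = Q ** diag_mat e ** transpose Q"
  have "X ** X = Q ** (diag_mat e ** (transpose Q ** Q) ** diag_mat e) ** transpose Q"
    unfolding X_def by (simp add: matrix_mul_assoc)
  also have "\<dots> = Q ** diag_mat (e * e) ** transpose Q"
    by (simp add: Q(1) diag_mult)
  also have "e * e = d" using Q(4) by (simp add: e_def vec_eq_iff)
  finally have XX: "X ** X = S" using Q(3) by simp
  have "transpose X = X" unfolding X_def by (simp add: matrix_transpose_mul matrix_mul_assoc)
  moreover have "0 \<le> x \<bullet> (X *v x)" for x
    unfolding X_def quad_spectral by (auto intro!: sum_nonneg mult_nonneg_nonneg simp: e_def Q(4))
  ultimately have "psd_mat X" by (simp add: psd_mat_def)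
  then show ?thesis using XX by blast
qed

lemma psd_sq_eig:
  assumes X: "psd_mat X" and e: "X ** X *v v = \<mu>^2 *\<^sub>R v" and mu: "\<mu> \<ge> 0"
  shows "X *v v = \<mu> *\<^sub>R v"
proof (cases "\<mu> = 0")
  case True
  have s: "transpose X = X" using X psd_sym by blast
  have "(X *v v) \<bullet> (X *v v) = v \<bullet> (X *v (X *v v))"
    by (metis inner_matrix_transpose s)
  also have "\<dots> = 0" using e True by (simp add: matrix_vector_mul_assoc)
  finally show ?thesis using True by simp
next
  case False
  define w where "w = X *v v - \<mu> *\<^sub>R v"
  have "X *v w = (X ** X) *v v - \<mu> *\<^sub>R (X *v v)"
    by (simp add: w_def matrix_vector_mult_diff_distrib matrix_vector_mult_scaleR matrix_vector_mul_assoc)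
  also have "\<dots> = - \<mu> *\<^sub>R w" using e by (simp add: w_def algebra_simps power2_eq_square)
  finally have Xw: "X *v w = - \<mu> *\<^sub>R w" .
  have "0 \<le> w \<bullet> (X *v w)" using X psd_matD by blast
  then have "\<mu> * (w \<bullet> w) \<le> 0" by (simp add: Xw)
  then have "w \<bullet> w \<le> 0" using mu False by (simp add: mult_le_0_iff)
  then have "w = 0" by (metis inner_eq_zero_iff inner_ge_zero order_antisym)
  then show ?thesis by (simp add: w_def)
qed

lemma psd_sqrt_unique:
  fixes Z :: "real^'n^'n"
  assumes X: "psd_mat X" and Z: "psd_mat Z" and eq: "X ** X = Z ** Z"
  shows "X = Z"
proof -
  obtain Q :: "real^'n^'n" and d where Q: "transpose Q ** Q = mat 1" "Q ** transpose Q = mat 1"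
    "Z = Q ** diag_mat d ** transpose Q" "\<forall>i. d $ i \<ge> 0"
    using spectral_psd[OF Z] by blast
  have ZQ: "Z ** Q = Q ** diag_mat d" using Q(1,3) by (simp add: matrix_mul_assoc[symmetric])
  have col: "Z *v (Q *v axis j 1) = d $ j *\<^sub>R (Q *v axis j 1)" for j
  proof -
    have "Z *v (Q *v axis j 1) = (Q ** diag_mat d) *v axis j 1" by (simp add: matrix_vector_mul_assoc ZQ)
    also have "\<dots> = Q *v (diag_mat d *v axis j 1)"
      by (simp add: matrix_vector_mul_assoc)
    also have "diag_mat d *v axis j 1 = d $ j *\<^sub>R axis j 1"
      by (auto simp: diag_mv axis_def vec_eq_iff)
    finally show ?thesis by (simp add: matrix_vector_mult_scaleR)
  qed
  have "X *v (Q *v axis j 1) = Z *v (Q *v axis j 1)" for j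
  proof -
    have "X ** X *v (Q *v axis j 1) = (d $ j)^2 *\<^sub>R (Q *v axis j 1)"
      by (simp add: eq matrix_vector_mul_assoc[symmetric] col matrix_vector_mult_scaleR power2_eq_square)
    then have "X *v (Q *v axis j 1) = d $ j *\<^sub>R (Q *v axis j 1)"
      using psd_sq_eig[OF X] Q(4) by blast
    then show ?thesis using col by simp
  qed
  then have "(X ** Q) $ i $ j = (Z ** Q) $ i $ j" for i j
    by (metis matrix_vector_mul_assoc mv_axis)
  then have "X ** Q = Z ** Q" by (simp add: vec_eq_iff)
  then have "X ** Q ** transpose Q = Z ** Q ** transpose Q" by simp
  then show ?thesis by (simp add: Q(2) matrix_mul_assoc[symmetric])
qed

lemma msqrt:
  assumes "psd_mat S"
  shows "psd_mat (msqrt S)" "msqrt S ** msqrt S = S"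
proof -
  have "\<exists>!X. psd_mat X \<and> X ** X = S"
    using psd_sqrt_exists[OF assms] psd_sqrt_unique by metis
  then have "psd_mat (msqrt S) \<and> msqrt S ** msqrt S = S"
    unfolding msqrt_def by (rule theI')
  then show "psd_mat (msqrt S)" "msqrt S ** msqrt S = S" by auto
qed

lemma psd_quad_zero:
  assumes "psd_mat M" "v \<bullet> (M *v v) = 0"
  shows "M *v v = 0"
proof -
  define Y where "Y = msqrt M"
  have Y: "psd_mat Y" "Y ** Y = M" using msqrt[OF assms(1)] Y_def by auto
  have "(Y *v v) \<bullet> (Y *v v) = v \<bullet> (Y *v (Y *v v))"
    by (metis inner_matrix_transpose psd_sym[OF Y(1)])
  also have "\<dots> = 0" using assms(2) Y(2) by (simp add: matrix_vector_mul_assoc)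
  finally have "Y *v v = 0" by simp
  then show ?thesis using Y(2) by (metis matrix_vector_mul_assoc matrix_vector_mult_0_right)
qed

lemma msqrt_pd:
  assumes "pd_mat S"
  shows "pd_mat (msqrt S)"
proof -
  have X: "psd_mat (msqrt S)" "msqrt S ** msqrt S = S" using msqrt[OF pd_psd[OF assms]] by auto
  have "0 < v \<bullet> (msqrt S *v v)" if v: "v \<noteq> 0" for v
  proof -
    have "0 \<le> v \<bullet> (msqrt S *v v)" using X psd_matD by blast
    moreover have "v \<bullet> (msqrt S *v v) \<noteq> 0"
    proof
      assume "v \<bullet> (msqrt S *v v) = 0"
      then have "msqrt S *v v = 0" using psd_quad_zero X by blast
      then have "S *v v = 0" using X(2) by (metis matrix_vector_mul_assoc matrix_vector_mult_0_right)
      then show False using pd_matD[OF assms v] by simp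
    qed
    ultimately show ?thesis by simp
  qed
  then show ?thesis using X psd_sym by (simp add: pd_mat_def)
qed

lemma det_pd_pos:
  fixes S :: "real^'n^'n"
  assumes "pd_mat S"
  shows "det S > 0"
proof -
  obtain Q :: "real^'n^'n" and d where Q: "transpose Q ** Q = mat 1" "Q ** transpose Q = mat 1"
    "S = Q ** diag_mat d ** transpose Q" "\<forall>i. d $ i > 0"
    using spectral_pd[OF assms] by blast
  then show ?thesis by (simp add: det_spectral prod_pos)
qed

lemma trace_psd_mult_nonneg:
  assumes "psd_mat A" "psd_mat B"
  shows "0 \<le> trace (A ** B)"
proof -
  define X where "X = msqrt B"
  have X: "psd_mat X" "X ** X = B" using msqrt[OF assms(2)] X_def by auto
  have "trace (A ** B) = trace (X ** A ** X)"
    by (metis X(2) matrix_mul_assoc trace_mul_sym)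
  also have "X ** A ** X = transpose X ** A ** X" using psd_sym[OF X(1)] by simp
  finally show ?thesis using psd_congr[OF assms(1), of X] trace_psd_nonneg by simp
qed



section \<open>Scalar logarithm bounds\<close>

lemma ln_upper1:
  fixes x :: real assumes "x \<ge> 1" shows "ln x \<le> (x - 1 / x) / 2"
proof -
  define f where "f y = (y - 1 / y) / 2 - ln y" for y :: real
  have d: "(f has_real_derivative ((1 + 1 / y^2) / 2 - 1 / y)) (at y)" if "y > 0" for y
    unfolding f_def using that
    by (auto intro!: derivative_eq_intros simp: power2_eq_square field_simps)
  have nn: "(1 + 1 / y^2) / 2 - 1 / y \<ge> 0" if "y > 0" for y :: real
  proof -
    have "(1 + 1 / y^2) / 2 - 1 / y = (y - 1)^2 / (2 * y^2)"
      using that by (simp add: field_simps power2_eq_square)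
    then show ?thesis by simp
  qed
  have "f 1 \<le> f x"
  proof (rule DERIV_nonneg_imp_nondecreasing[of 1 x f])
    show "1 \<le> x" by (rule assms)
    fix y assume "1 \<le> y" "y \<le> x"
    then have "y > 0" by simp
    then show "\<exists>z. DERIV f y :> z \<and> z \<ge> 0" using d nn by blast
  qed
  then show ?thesis by (simp add: f_def)
qed

lemma ln_upper2:
  fixes x :: real assumes "0 < x" "x \<le> 1" shows "ln x \<le> (x - 1) - (x - 1)^2 / 2"
proof -
  define g where "g y = (y - 1) - (y - 1)^2 / 2 - ln y" for y :: real
  have d: "(g has_real_derivative (1 - (y - 1) - 1 / y)) (at y)" if "y > 0" for y
    unfolding g_def using that
    by (auto intro!: derivative_eq_intros simp: power2_eq_square field_simps)
  have np: "1 - (y - 1) - 1 / y \<le> 0" if "y > 0" for y :: real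
  proof -
    have "1 - (y - 1) - 1 / y = - ((y - 1)^2 / y)"
      using that by (simp add: field_simps power2_eq_square)
    then show ?thesis using that by simp
  qed
  have "g 1 \<le> g x"
  proof (rule DERIV_nonpos_imp_nonincreasing[of x 1 g])
    show "x \<le> 1" by (rule assms)
    fix y assume "x \<le> y" "y \<le> 1"
    then have "y > 0" using assms(1) by simp
    then show "\<exists>z. DERIV g y :> z \<and> z \<le> 0" using d np by blast
  qed
  then show ?thesis by (simp add: g_def)
qed

definition gam :: "real \<Rightarrow> real" where "gam d = 2 * d + sqrt (2 * d)"

lemma gibbs_scalar: "0 < (x::real) \<Longrightarrow> 0 \<le> x - 1 - ln x"
  using ln_le_minus_one[of x] by simp

lemma gibbs_quant:
  fixes x d :: real
  assumes hx: "0 < x" and hle: "x - 1 - ln x \<le> d"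
  shows "\<bar>x - 1\<bar> \<le> gam d"
proof -
  have d0: "0 \<le> d" using gibbs_scalar[OF hx] hle by linarith
  show ?thesis
  proof (cases "x \<ge> 1")
    case True
    define t where "t = x - 1"
    have t0: "t \<ge> 0" using True t_def by simp
    have "x - 1 - (x - 1 / x) / 2 \<le> d" using ln_upper1[OF True] hle by linarith
    moreover have "x - 1 - (x - 1 / x) / 2 = t^2 / (2 * (1 + t))"
      using hx unfolding t_def by (simp add: field_simps power2_eq_square)
    ultimately have "t^2 / (2 * (1 + t)) \<le> d" by simp
    then have tt: "t^2 \<le> 2 * d * (1 + t)" using t0 by (simp add: field_simps)
    have "t \<le> 2 * d + sqrt (2 * d)"
    proof (rule ccontr)
      assume "\<not> ?thesis"
      then have big: "t > 2 * d + sqrt (2 * d)" by simp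
      have s0: "sqrt (2 * d) \<ge> 0" using d0 by simp
      have ts: "t > sqrt (2 * d)" using big d0 by simp
      have "t * sqrt (2 * d) \<ge> sqrt (2 * d) * sqrt (2 * d)"
        using ts s0 by (intro mult_right_mono) auto
      also have "sqrt (2 * d) * sqrt (2 * d) = 2 * d" using d0 by simp
      finally have a: "t * sqrt (2 * d) \<ge> 2 * d" .
      have "t^2 = t * t" by (simp add: power2_eq_square)
      also have "\<dots> > t * (2 * d + sqrt (2 * d))"
        using big ts s0 by (intro mult_strict_left_mono) linarith+
      finally have "t^2 > 2 * d * t + t * sqrt (2 * d)" by (simp add: algebra_simps)
      then have "t^2 > 2 * d * (1 + t)" using a by (simp add: algebra_simps)
      then show False using tt by simp
    qed
    then show ?thesis unfolding gam_def t_def using True by simp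
  next
    case False
    define t where "t = 1 - x"
    have t0: "t \<ge> 0" using False t_def by simp
    have "x - 1 - ((x - 1) - (x - 1)^2 / 2) \<le> d" using ln_upper2[OF hx] False hle by simp
    then have "t^2 \<le> 2 * d" unfolding t_def by (simp add: power2_eq_square algebra_simps)
    then have "t \<le> sqrt (2 * d)" using t0 by (simp add: real_le_rsqrt)
    then show ?thesis unfolding gam_def t_def using False d0 by simp
  qed
qed

lemma gam_tendsto: "(f \<longlongrightarrow> 0) F \<Longrightarrow> ((\<lambda>x. gam (f x)) \<longlongrightarrow> 0) F"
  unfolding gam_def by (auto intro!: tendsto_eq_intros)


section \<open>Matrix Gibbs inequality\<close>

definition Dv :: "real^'n^'n \<Rightarrow> real^'n^'n \<Rightarrow> real" where
  "Dv M S = trace (matrix_inv S ** M) - real CARD('n) - ln (det (matrix_inv S ** M))"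

lemma gibbs_matrix:
  fixes M S :: "real^'n^'n"
  assumes M: "pd_mat M" and S: "pd_mat S"
  shows "0 \<le> Dv M S"
    and "\<bar>v \<bullet> (M *v v) - v \<bullet> (S *v v)\<bar> \<le> gam (Dv M S) * (v \<bullet> (S *v v))"
proof -
  define X where "X = msqrt S"
  have Xpd: "pd_mat X" unfolding X_def by (rule msqrt_pd[OF S])
  have XX: "X ** X = S" unfolding X_def by (rule msqrt(2)[OF pd_psd[OF S]])
  have invX: "invertible X" by (rule pd_invertible[OF Xpd])
  have Xs: "transpose X = X" by (rule pd_sym[OF Xpd])
  define Z where "Z = matrix_inv X"
  have Zpd: "pd_mat Z" unfolding Z_def by (rule pd_inv[OF Xpd])
  have Zs: "transpose Z = Z" by (rule pd_sym[OF Zpd])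
  have invZ: "invertible Z" by (rule pd_invertible[OF Zpd])
  have ZX: "Z ** X = mat 1" unfolding Z_def by (rule invertible_inv(2)[OF invX])
  have XZ: "X ** Z = mat 1" unfolding Z_def by (rule invertible_inv(1)[OF invX])
  have ZZ: "matrix_inv S = Z ** Z"
    unfolding XX[symmetric] Z_def by (rule inv_mult[OF invX invX])
  define Y where "Y = Z ** M ** Z"
  have Ypd: "pd_mat Y"
  proof -
    have "pd_mat (transpose Z ** M ** Z)"
      by (rule pd_congr[OF M]) (rule invertible_imp_inj[OF invZ])
    then show ?thesis unfolding Y_def Zs .
  qed
  have trY: "trace Y = trace (matrix_inv S ** M)"
  proof -
    have "trace Y = trace ((M ** Z) ** Z)" unfolding Y_def
      by (metis matrix_mul_assoc trace_mul_sym)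
    also have "\<dots> = trace (M ** (Z ** Z))" by (simp add: matrix_mul_assoc)
    also have "\<dots> = trace ((Z ** Z) ** M)" by (rule trace_mul_sym)
    finally show ?thesis by (simp add: ZZ)
  qed
  have detY: "det Y = det (matrix_inv S ** M)"
    unfolding Y_def ZZ by (simp add: det_mul)
  obtain Q :: "real^'n^'n" and d where Q: "transpose Q ** Q = mat 1" "Q ** transpose Q = mat 1"
    "Y = Q ** diag_mat d ** transpose Q" "\<forall>i. d $ i > 0"
    by (rule spectral_pd[OF Ypd])
  have lnprod: "ln (prod (\<lambda>i. d $ i) UNIV) = (\<Sum>i\<in>UNIV. ln (d $ i))"
    by (rule ln_prod) (use Q(4) in \<open>auto simp: less_le\<close>)
  have card: "real CARD('n) = (\<Sum>i\<in>(UNIV::'n set). 1)" by simp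
  have Deq: "Dv M S = (\<Sum>i\<in>UNIV. d $ i - 1 - ln (d $ i))"
    unfolding Dv_def trY[symmetric] detY[symmetric] Q(3) trace_spectral[OF Q(1)] det_spectral[OF Q(2)]
      lnprod card by (simp add: sum_subtractf)
  have dp: "d $ i > 0" for i using Q(4) by blast
  have terms: "0 \<le> d $ i - 1 - ln (d $ i)" for i using gibbs_scalar[OF dp] by blast
  show D0: "0 \<le> Dv M S" unfolding Deq by (rule sum_nonneg) (use terms in auto)
  have tle: "d $ i - 1 - ln (d $ i) \<le> Dv M S" for i
    unfolding Deq by (rule member_le_sum) (use terms in auto)
  have lam: "\<bar>d $ i - 1\<bar> \<le> gam (Dv M S)" for i by (rule gibbs_quant[OF dp tle])
  define u where "u = X *v v"
  have quadM: "u \<bullet> (Y *v u) = v \<bullet> (M *v v)"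
  proof -
    have "Y *v u = Z *v (M *v v)"
      unfolding Y_def u_def by (simp add: matrix_vector_mul_assoc matrix_mul_assoc[symmetric] ZX)
    then have "u \<bullet> (Y *v u) = (X *v v) \<bullet> (Z *v (M *v v))" by (simp add: u_def)
    also have "\<dots> = v \<bullet> (transpose X *v (Z *v (M *v v)))"
      using inner_matrix_transpose[of v "transpose X" "Z *v (M *v v)"] by (simp only: transpose_transpose)
    also have "transpose X *v (Z *v (M *v v)) = M *v v"
      unfolding Xs by (simp add: matrix_vector_mul_assoc matrix_mul_assoc XZ)
    finally show ?thesis .
  qed
  have quadS: "u \<bullet> u = v \<bullet> (S *v v)"
  proof -
    have "u \<bullet> u = v \<bullet> (transpose X *v (X *v v))" unfolding u_def
      using inner_matrix_transpose[of v "transpose X" "X *v v"] by (simp only: transpose_transpose)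
    also have "transpose X *v (X *v v) = S *v v" unfolding Xs
      by (simp add: matrix_vector_mul_assoc XX)
    finally show ?thesis .
  qed
  define w where "w = transpose Q *v u"
  have qY: "u \<bullet> (Y *v u) = (\<Sum>i\<in>UNIV. d $ i * (w $ i)^2)"
    unfolding w_def Q(3) by (rule quad_spectral)
  have qI: "u \<bullet> u = (\<Sum>i\<in>UNIV. (w $ i)^2)"
  proof -
    have "u \<bullet> u = w \<bullet> w" unfolding w_def by (rule orth_norm[OF Q(2), symmetric])
    then show ?thesis by (simp add: inner_vec_def power2_eq_square)
  qed
  have "\<bar>v \<bullet> (M *v v) - v \<bullet> (S *v v)\<bar> = \<bar>\<Sum>i\<in>UNIV. (d $ i - 1) * (w $ i)^2\<bar>"
    unfolding quadM[symmetric] quadS[symmetric] qY qI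
    by (simp add: sum_subtractf[symmetric] algebra_simps)
  also have "\<dots> \<le> (\<Sum>i\<in>UNIV. \<bar>(d $ i - 1) * (w $ i)^2\<bar>)" by (rule sum_abs)
  also have "\<dots> \<le> (\<Sum>i\<in>UNIV. gam (Dv M S) * (w $ i)^2)"
    by (rule sum_mono) (simp add: abs_mult mult_right_mono lam)
  also have "\<dots> = gam (Dv M S) * (v \<bullet> (S *v v))"
    unfolding quadS[symmetric] qI by (simp add: sum_distrib_left)
  finally show "\<bar>v \<bullet> (M *v v) - v \<bullet> (S *v v)\<bar> \<le> gam (Dv M S) * (v \<bullet> (S *v v))" .
qed



section \<open>Policy covariance formulas\<close>

lemma psd_inj_plus:
  fixes S C :: "real^'m^'m"
  assumes S: "psd_mat S" and C: "psd_mat C"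
  shows "invertible (mat 1 + C ** S)"
proof (rule invertible_inj)
  fix v assume v: "(mat 1 + C ** S) *v v = 0"
  then have vv: "v = - (C *v (S *v v))"
    by (simp add: matrix_vector_mult_add_rdistrib matrix_vector_mul_assoc eq_neg_iff_add_eq_0)
  have Ss: "transpose S = S" using psd_sym[OF S] .
  have "v \<bullet> (S *v v) = (S *v v) \<bullet> v"
    by (rule inner_commute)
  also have "\<dots> = - ((S *v v) \<bullet> (C *v (S *v v)))"
    by (subst vv) (simp add: inner_minus_right)
  finally have e: "v \<bullet> (S *v v) = - ((S *v v) \<bullet> (C *v (S *v v)))" .
  have "0 \<le> (S *v v) \<bullet> (C *v (S *v v))" by (rule psd_matD[OF C])
  moreover have "0 \<le> v \<bullet> (S *v v)" by (rule psd_matD[OF S])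
  ultimately have "v \<bullet> (S *v v) = 0" using e by linarith
  then have "S *v v = 0" by (rule psd_quad_zero[OF S])
  then show "v = 0" using vv by simp
qed

lemma spi_formula:
  fixes S C :: "real^'m^'m"
  assumes S: "psd_mat S" and C: "psd_mat C"
  shows "Spi_of S C = S ** matrix_inv (mat 1 + C ** S)"
proof -
  define X where "X = msqrt S"
  have Xp: "psd_mat X" and XX: "X ** X = S" unfolding X_def using msqrt[OF S] by auto
  have Xs: "transpose X = X" using psd_sym[OF Xp] .
  define E where "E = mat 1 + X ** C ** X"
  have Epd: "pd_mat E" unfolding E_def
  proof (rule pd_add_psd[OF pd_one])
    show "psd_mat (X ** C ** X)" using psd_congr[OF C, of X] Xs by simp
  qed
  have invE: "invertible E" by (rule pd_invertible[OF Epd])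
  have invF: "invertible (mat 1 + C ** S)" by (rule psd_inj_plus[OF S C])
  have EX: "E ** X = X ** (mat 1 + C ** S)"
    unfolding E_def XX[symmetric] by (simp add: mat_simps matrix_mul_assoc)
  have "matrix_inv E ** X = X ** matrix_inv (mat 1 + C ** S)"
  proof -
    have "matrix_inv E ** X = matrix_inv E ** (X ** (mat 1 + C ** S)) ** matrix_inv (mat 1 + C ** S)"
      by (simp add: matrix_mul_assoc[symmetric] invertible_inv[OF invF])
    also have "\<dots> = matrix_inv E ** (E ** X) ** matrix_inv (mat 1 + C ** S)" by (simp add: EX)
    also have "\<dots> = X ** matrix_inv (mat 1 + C ** S)"
      by (simp add: matrix_mul_assoc invertible_inv[OF invE])
    finally show ?thesis .
  qed
  then have "X ** matrix_inv E ** X = X ** X ** matrix_inv (mat 1 + C ** S)"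
    by (simp add: matrix_mul_assoc[symmetric])
  then show ?thesis unfolding Spi_of_def X_def[symmetric] E_def[symmetric] XX by (simp add: matrix_mul_assoc)
qed

lemma spi_pd:
  fixes S C :: "real^'m^'m"
  assumes S: "pd_mat S" and C: "psd_mat C"
  shows "Spi_of S C = matrix_inv (matrix_inv S + C)"
    and "pd_mat (Spi_of S C)"
    and "matrix_inv (Spi_of S C) = matrix_inv S + C"
proof -
  have invS: "invertible S" by (rule pd_invertible[OF S])
  have Gpd: "pd_mat (matrix_inv S + C)" by (rule pd_add_psd[OF pd_inv[OF S] C])
  have invG: "invertible (matrix_inv S + C)" by (rule pd_invertible[OF Gpd])
  have eq: "mat 1 + C ** S = (matrix_inv S + C) ** S"
    by (simp add: mat_simps invertible_inv[OF invS])
  have "Spi_of S C = S ** matrix_inv ((matrix_inv S + C) ** S)"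
    using spi_formula[OF pd_psd[OF S] C] eq by simp
  also have "\<dots> = S ** (matrix_inv S ** matrix_inv (matrix_inv S + C))"
    by (simp add: inv_mult[OF invG invS])
  also have "\<dots> = matrix_inv (matrix_inv S + C)"
    by (simp add: matrix_mul_assoc invertible_inv[OF invS])
  finally show e: "Spi_of S C = matrix_inv (matrix_inv S + C)" .
  show "pd_mat (Spi_of S C)" unfolding e by (rule pd_inv[OF Gpd])
  show "matrix_inv (Spi_of S C) = matrix_inv S + C" unfolding e by (rule inv_inv[OF invG])
qed

section \<open>Completed square\<close>

lemma completed_square:
  fixes Pi1 :: "real^'n^'n" and A :: "real^'n^'n" and B :: "real^'m^'n"
    and H0 Sst :: "real^'m^'m" and P :: "real^'n^'m"
  assumes Pis: "transpose Pi1 = Pi1" and H0s: "transpose H0 = H0" and Ss: "transpose Sst = Sst"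
    and HS: "(H0 + transpose B ** Pi1 ** B) ** Sst = eps *\<^sub>R mat 1" and eps: "eps \<noteq> 0"
  defines "K \<equiv> transpose B ** Pi1 ** A"
  defines "Pst \<equiv> - ((1 / eps) *\<^sub>R (Sst ** K))"
  defines "H \<equiv> H0 + transpose B ** Pi1 ** B"
  shows "transpose (A + B ** P) ** Pi1 ** (A + B ** P) + transpose P ** H0 ** P
           - (transpose A ** Pi1 ** A - (1 / eps) *\<^sub>R (transpose K ** Sst ** K))
         = transpose (P - Pst) ** H ** (P - Pst)"
proof -
  have Hs: "transpose H = H" unfolding H_def using Pis H0s by (simp add: mat_simps matrix_mul_assoc)
  have HSt: "H ** Sst = eps *\<^sub>R mat 1" using HS unfolding H_def .
  have HP: "H ** Pst = - K"
  proof -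
    have "H ** Pst = - ((1 / eps) *\<^sub>R ((H ** Sst) ** K))"
      unfolding Pst_def by (simp add: mat_simps matrix_mul_assoc)
    also have "\<dots> = - K" using eps by (simp add: HSt mat_simps)
    finally show ?thesis .
  qed
  have PH: "transpose Pst ** H = - transpose K"
  proof -
    have "transpose Pst ** H = transpose (H ** Pst)" using Hs by (simp add: matrix_transpose_mul)
    then show ?thesis by (simp add: HP transpose_uminus)
  qed
  have Kt: "transpose K = transpose A ** Pi1 ** B"
    unfolding K_def using Pis by (simp add: matrix_transpose_mul matrix_mul_assoc)
  have PHP: "transpose Pst ** H ** Pst = (1 / eps) *\<^sub>R (transpose K ** Sst ** K)"
  proof -
    have "transpose Pst ** H ** Pst = - (transpose K ** Pst)" by (simp add: PH mat_simps)
    also have "\<dots> = (1 / eps) *\<^sub>R (transpose K ** Sst ** K)"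
      unfolding Pst_def by (simp add: mat_simps matrix_mul_assoc)
    finally show ?thesis .
  qed
  have R: "transpose (P - Pst) ** H ** (P - Pst)
      = transpose P ** H ** P - transpose P ** (H ** Pst) - (transpose Pst ** H) ** P + transpose Pst ** H ** Pst"
    by (simp add: mat_simps matrix_mul_assoc algebra_simps)
  have L: "transpose (A + B ** P) ** Pi1 ** (A + B ** P) =
      transpose A ** Pi1 ** A + transpose K ** P + transpose P ** K + transpose P ** (transpose B ** Pi1 ** B) ** P"
    unfolding Kt K_def using Pis by (simp add: mat_simps matrix_mul_assoc algebra_simps)
  show ?thesis
    unfolding R L HP PH PHP unfolding H_def Pst_def by (simp add: mat_simps matrix_mul_assoc algebra_simps)
qed



primrec Xpol :: "(nat \<Rightarrow> real^'n^'n) \<Rightarrow> (nat \<Rightarrow> real^'m^'n) \<Rightarrow> (nat \<Rightarrow> real^'n^'n) \<Rightarrow> real^'n^'n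
    \<Rightarrow> (nat \<Rightarrow> real^'n^'m) \<Rightarrow> (nat \<Rightarrow> real^'m^'m) \<Rightarrow> nat \<Rightarrow> real^'n^'n" where
  "Xpol A B Sw X0 P Sg 0 = X0"
| "Xpol A B Sw X0 P Sg (Suc k) =
     (A k + B k ** P k) ** Xpol A B Sw X0 P Sg k ** transpose (A k + B k ** P k)
     + B k ** Sg k ** transpose (B k) + Sw k"

definition Mpol :: "(nat \<Rightarrow> real^'n^'n) \<Rightarrow> (nat \<Rightarrow> real^'m^'n) \<Rightarrow> (nat \<Rightarrow> real^'n^'n) \<Rightarrow> real^'n^'n
    \<Rightarrow> (nat \<Rightarrow> real^'n^'m) \<Rightarrow> (nat \<Rightarrow> real^'m^'m) \<Rightarrow> nat \<Rightarrow> real^'m^'m" where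
  "Mpol A B Sw X0 P Sg k = Sg k + P k ** Xpol A B Sw X0 P Sg k ** transpose (P k)"

definition stepc :: "real \<Rightarrow> real^'m^'m \<Rightarrow> real^'m^'m \<Rightarrow> real^'m^'m \<Rightarrow> real^'m^'m \<Rightarrow> real" where
  "stepc eps Rk Sk Sgk Mk = (1/2) * trace (Rk ** Mk)
     + (eps / 2) * (trace (matrix_inv Sk ** Mk) - real CARD('m) - ln (det Sgk) + ln (det Sk))"

definition Jc :: "real \<Rightarrow> nat \<Rightarrow> (nat \<Rightarrow> real^'n^'n) \<Rightarrow> (nat \<Rightarrow> real^'m^'n) \<Rightarrow> (nat \<Rightarrow> real^'m^'m)
    \<Rightarrow> (nat \<Rightarrow> real^'n^'n) \<Rightarrow> real^'n^'n \<Rightarrow> real^'n^'n \<Rightarrow> (nat \<Rightarrow> real^'m^'m)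
    \<Rightarrow> (nat \<Rightarrow> real^'n^'m) \<Rightarrow> (nat \<Rightarrow> real^'m^'m) \<Rightarrow> real" where
  "Jc eps T A B R Sw F X0 S P Sg =
     (\<Sum>k<T. stepc eps (R k) (S k) (Sg k) (Mpol A B Sw X0 P Sg k))
     + (1/2) * trace (F ** Xpol A B Sw X0 P Sg T)"

lemma PiM_T: "PiM eps T A B R F S T = F"
  by (simp add: PiM_def)

lemma PiM_step:
  assumes "k < T"
  shows "PiM eps T A B R F S k =
    transpose (A k) ** PiM eps T A B R F S (Suc k) ** A k
    - (1 / eps) *\<^sub>R (transpose (A k) ** PiM eps T A B R F S (Suc k) ** B k
        ** SpiM eps T A B R F S k ** transpose (B k) ** PiM eps T A B R F S (Suc k) ** A k)"
proof -
  have e: "T - k = Suc (T - Suc k)" using assms by simp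
  have e2: "T - Suc (T - Suc k) = k" using assms by simp
  show ?thesis
    unfolding PiM_def e by (simp add: Let_def e2 SpiM_def PiM_def)
qed

lemma SxM_Xpol:
  "SxM eps T A B R Sw F Sxini S k =
   Xpol A B Sw Sxini (PgainM eps T A B R F S) (SpiM eps T A B R F S) k"
  by (induction k) (simp_all add: Let_def)

lemma Aop_Mpol:
  "k < T \<Longrightarrow> Aop eps T A B R Sw F Sxini S k =
     Mpol A B Sw Sxini (PgainM eps T A B R F S) (SpiM eps T A B R F S) k"
  by (simp add: Aop_def Mpol_def SxM_Xpol)

lemma Xpol_psd:
  assumes "psd_mat X0" "\<forall>k<T. psd_mat (Sg k)" "\<forall>k<T. psd_mat (Sw k)"
  shows "k \<le> T \<Longrightarrow> psd_mat (Xpol A B Sw X0 P Sg k)"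
proof (induction k)
  case 0
  then show ?case using assms by simp
next
  case (Suc k)
  then have k: "k < T" by simp
  show ?case
    using Suc k assms
    by (simp del: Xpol.simps(2) add: Xpol.simps(2) psd_add psd_congr' Suc_leD)
qed

lemma Mpol_psd:
  assumes "psd_mat X0" "\<forall>k<T. psd_mat (Sg k)" "\<forall>k<T. psd_mat (Sw k)" "k < T"
  shows "psd_mat (Mpol A B Sw X0 P Sg k)"
  unfolding Mpol_def using assms Xpol_psd[OF assms(1-3), of k]
  by (simp add: psd_add psd_congr')

lemma Mpol_pd:
  assumes "psd_mat X0" "\<forall>k<T. pd_mat (Sg k)" "\<forall>k<T. psd_mat (Sw k)" "k < T"
  shows "pd_mat (Mpol A B Sw X0 P Sg k)"
proof -
  have sg: "\<forall>k<T. psd_mat (Sg k)" using assms(2) pd_psd by blast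
  have "psd_mat (Xpol A B Sw X0 P Sg k)" by (rule Xpol_psd[OF assms(1) sg assms(3)]) (use assms(4) in simp)
  then show ?thesis unfolding Mpol_def using assms by (simp add: pd_add_psd psd_congr')
qed


lemma Cmat_psd:
  assumes "pd_mat Rk" "psd_mat Pi1" "eps > 0"
  shows "psd_mat (Cmat eps Rk Bk Pi1)"
  unfolding Cmat_def using assms
  by (intro psd_scaleR psd_add psd_congr) (auto simp: pd_psd)

context
  fixes eps :: real and T :: nat and A :: "nat \<Rightarrow> real^'n^'n" and B :: "nat \<Rightarrow> real^'m^'n"
    and R :: "nat \<Rightarrow> real^'m^'m" and F :: "real^'n^'n"
  assumes eps: "eps > 0" and Rpd: "\<forall>k<T. pd_mat (R k)" and Fpsd: "psd_mat F"
begin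

lemma step_facts:
  fixes S :: "nat \<Rightarrow> real^'m^'m"
  assumes n: "n < T" and Sn: "pd_mat (S n)" and Pi1: "psd_mat (PiM eps T A B R F S (Suc n))"
  defines "Pi1m \<equiv> PiM eps T A B R F S (Suc n)"
  defines "Sst \<equiv> SpiM eps T A B R F S n"
  defines "Pst \<equiv> PgainM eps T A B R F S n"
  defines "H0 \<equiv> R n + eps *\<^sub>R matrix_inv (S n)"
  shows "pd_mat Sst"
    and "matrix_inv Sst = matrix_inv (S n) + Cmat eps (R n) (B n) Pi1m"
    and "eps *\<^sub>R matrix_inv Sst = H0 + transpose (B n) ** Pi1m ** B n"
    and "transpose (A n + B n ** P) ** Pi1m ** (A n + B n ** P) + transpose P ** H0 ** P
           - PiM eps T A B R F S n
         = transpose (P - Pst) ** (eps *\<^sub>R matrix_inv Sst) ** (P - Pst)"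
    and "pd_mat H0"
proof -
  have Rn: "pd_mat (R n)" using Rpd n by blast
  have C: "psd_mat (Cmat eps (R n) (B n) Pi1m)" unfolding Pi1m_def by (rule Cmat_psd[OF Rn Pi1 eps])
  have Sst_eq: "Sst = Spi_of (S n) (Cmat eps (R n) (B n) Pi1m)"
    unfolding Sst_def SpiM_def Pi1m_def ..
  show Spd: "pd_mat Sst" unfolding Sst_eq by (rule spi_pd(2)[OF Sn C])
  show Sinv: "matrix_inv Sst = matrix_inv (S n) + Cmat eps (R n) (B n) Pi1m"
    unfolding Sst_eq by (rule spi_pd(3)[OF Sn C])
  show Heq: "eps *\<^sub>R matrix_inv Sst = H0 + transpose (B n) ** Pi1m ** B n"
    unfolding Sinv H0_def Cmat_def using eps by (simp add: scaleR_add_right algebra_simps)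
  show H0pd: "pd_mat H0" unfolding H0_def
    by (rule pd_add_psd[OF Rn psd_scaleR[OF pd_psd[OF pd_inv[OF Sn]]]]) (use eps in simp)
  have Pis: "transpose Pi1m = Pi1m" using psd_sym[OF Pi1] Pi1m_def by simp
  have H0s: "transpose H0 = H0" using pd_sym[OF H0pd] .
  have Ss: "transpose Sst = Sst" using pd_sym[OF Spd] .
  have invS: "invertible Sst" by (rule pd_invertible[OF Spd])
  have HS: "(H0 + transpose (B n) ** Pi1m ** B n) ** Sst = eps *\<^sub>R mat 1"
    unfolding Heq[symmetric] by (simp add: mat_simps invertible_inv[OF invS])
  have cs: "transpose (A n + B n ** P) ** Pi1m ** (A n + B n ** P) + transpose P ** H0 ** P
           - (transpose (A n) ** Pi1m ** A n - (1 / eps) *\<^sub>R (transpose (transpose (B n) ** Pi1m ** A n) ** Sst ** (transpose (B n) ** Pi1m ** A n)))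
         = transpose (P - - ((1 / eps) *\<^sub>R (Sst ** (transpose (B n) ** Pi1m ** A n)))) ** (H0 + transpose (B n) ** Pi1m ** B n)
             ** (P - - ((1 / eps) *\<^sub>R (Sst ** (transpose (B n) ** Pi1m ** A n))))"
    by (rule completed_square[OF Pis H0s Ss HS]) (use eps in simp)
  have e1: "- ((1 / eps) *\<^sub>R (Sst ** (transpose (B n) ** Pi1m ** A n))) = Pst"
    unfolding Pst_def PgainM_def Sst_def Pi1m_def by (simp add: matrix_mul_assoc)
  have e2: "transpose (A n) ** Pi1m ** A n - (1 / eps) *\<^sub>R (transpose (transpose (B n) ** Pi1m ** A n) ** Sst ** (transpose (B n) ** Pi1m ** A n))
      = PiM eps T A B R F S n"
    unfolding PiM_step[OF n] Pi1m_def[symmetric] Sst_def[symmetric]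
    using Pis by (simp add: matrix_transpose_mul matrix_mul_assoc)
  show "transpose (A n + B n ** P) ** Pi1m ** (A n + B n ** P) + transpose P ** H0 ** P
           - PiM eps T A B R F S n
         = transpose (P - Pst) ** (eps *\<^sub>R matrix_inv Sst) ** (P - Pst)"
    using cs unfolding e1 e2 Heq .
qed

lemma Pi_psd:
  fixes S :: "nat \<Rightarrow> real^'m^'m"
  assumes S: "\<forall>k<T. pd_mat (S k)"
  shows "k \<le> T \<Longrightarrow> psd_mat (PiM eps T A B R F S k)"
proof (induction k rule: inc_induct)
  case base
  then show ?case using Fpsd by (simp add: PiM_T)
next
  case (step n)
  have n: "n < T" using step by simp
  let ?P = "PgainM eps T A B R F S n"
  have sf: "transpose (A n + B n ** ?P) ** PiM eps T A B R F S (Suc n) ** (A n + B n ** ?P)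
      + transpose ?P ** (R n + eps *\<^sub>R matrix_inv (S n)) ** ?P - PiM eps T A B R F S n = 0"
    using step_facts(4)[OF n _ step.IH, of ?P] S n by simp
  have H0: "pd_mat (R n + eps *\<^sub>R matrix_inv (S n))" using step_facts(5)[OF n _ step.IH] S n by simp
  have "PiM eps T A B R F S n = transpose (A n + B n ** ?P) ** PiM eps T A B R F S (Suc n) ** (A n + B n ** ?P)
      + transpose ?P ** (R n + eps *\<^sub>R matrix_inv (S n)) ** ?P"
    using sf by (simp add: algebra_simps)
  then show ?case
    by (simp add: psd_add psd_congr step.IH pd_psd[OF H0])
qed


lemma det_inv_pd: "pd_mat (M::real^'k^'k) \<Longrightarrow> det (matrix_inv M) = 1 / det M"
proof -
  assume M: "pd_mat M"
  have "det (matrix_inv M) * det M = 1"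
    by (metis det_I det_mul invertible_inv(2) pd_invertible M)
  moreover have "det M > 0" by (rule det_pd_pos[OF M])
  ultimately show ?thesis by (simp add: field_simps)
qed

lemma ln_det_rel:
  assumes "pd_mat (Sg::real^'k^'k)" "pd_mat Sst"
  shows "ln (det (matrix_inv Sst ** Sg)) = ln (det Sg) - ln (det Sst)"
proof -
  have p1: "det Sg > 0" "det Sst > 0" using det_pd_pos assms by auto
  have "det (matrix_inv Sst ** Sg) = det Sg / det Sst"
    by (simp add: det_mul det_inv_pd[OF assms(2)])
  then show ?thesis using p1 by (simp add: ln_div)
qed

lemma step_identity:
  fixes S :: "nat \<Rightarrow> real^'m^'m" and P :: "real^'n^'m" and Sg :: "real^'m^'m" and X W :: "real^'n^'n"
  assumes n: "n < T" and Sn: "pd_mat (S n)" and Pi1: "psd_mat (PiM eps T A B R F S (Suc n))"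
    and Sg: "pd_mat Sg"
  defines "Pi1m \<equiv> PiM eps T A B R F S (Suc n)"
  defines "Pim \<equiv> PiM eps T A B R F S n"
  defines "Sst \<equiv> SpiM eps T A B R F S n"
  defines "Pst \<equiv> PgainM eps T A B R F S n"
  defines "M \<equiv> Sg + P ** X ** transpose P"
  defines "X' \<equiv> (A n + B n ** P) ** X ** transpose (A n + B n ** P) + B n ** Sg ** transpose (B n) + W"
  shows "stepc eps (R n) (S n) Sg M + (1/2) * trace (Pi1m ** X') - (1/2) * trace (Pim ** X)
    = (eps/2) * (Dv Sg Sst + trace (matrix_inv Sst ** (P - Pst) ** X ** transpose (P - Pst)))
      + (1/2) * trace (Pi1m ** W) + (eps/2) * (ln (det (S n)) - ln (det Sst))"
proof -
  define H0 where "H0 = R n + eps *\<^sub>R matrix_inv (S n)"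
  define G where "G = transpose (B n) ** Pi1m ** B n"
  define AB where "AB = A n + B n ** P"
  define D where "D = P - Pst"
  have Spd: "pd_mat Sst" unfolding Sst_def by (rule step_facts(1)[OF n Sn Pi1])
  have Heq: "eps *\<^sub>R matrix_inv Sst = H0 + G"
    unfolding H0_def G_def Sst_def Pi1m_def by (rule step_facts(3)[OF n Sn Pi1])
  have CS0: "transpose AB ** Pi1m ** AB + transpose P ** H0 ** P - Pim = transpose D ** (eps *\<^sub>R matrix_inv Sst) ** D"
    unfolding AB_def H0_def D_def Pim_def Pi1m_def Pst_def Sst_def
    by (rule step_facts(4)[OF n Sn Pi1])
  have CS: "transpose AB ** Pi1m ** AB + transpose P ** H0 ** P - Pim = transpose D ** (H0 + G) ** D"
    using CS0 unfolding Heq .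
  have T1: "trace (R n ** M) + eps * trace (matrix_inv (S n) ** M) = trace (H0 ** M)"
    unfolding H0_def by (simp add: mat_simps trace_add trace_scaleR)
  have T2: "trace (H0 ** M) = trace (H0 ** Sg) + trace (transpose P ** H0 ** P ** X)"
  proof -
    have "trace (H0 ** (P ** X ** transpose P)) = trace ((H0 ** P ** X) ** transpose P)"
      by (simp add: matrix_mul_assoc)
    also have "\<dots> = trace (transpose P ** (H0 ** P ** X))" by (rule trace_mul_sym)
    finally show ?thesis unfolding M_def by (simp add: mat_simps trace_add matrix_mul_assoc)
  qed
  have T3: "trace (Pi1m ** X') = trace (transpose AB ** Pi1m ** AB ** X) + trace (G ** Sg) + trace (Pi1m ** W)"
  proof -
    have a: "trace (Pi1m ** (AB ** X ** transpose AB)) = trace (transpose AB ** Pi1m ** AB ** X)"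
    proof -
      have "trace (Pi1m ** (AB ** X ** transpose AB)) = trace ((Pi1m ** AB ** X) ** transpose AB)"
        by (simp add: matrix_mul_assoc)
      also have "\<dots> = trace (transpose AB ** (Pi1m ** AB ** X))" by (rule trace_mul_sym)
      finally show ?thesis by (simp add: matrix_mul_assoc)
    qed
    have b: "trace (Pi1m ** (B n ** Sg ** transpose (B n))) = trace (G ** Sg)"
    proof -
      have "trace (Pi1m ** (B n ** Sg ** transpose (B n))) = trace ((Pi1m ** B n ** Sg) ** transpose (B n))"
        by (simp add: matrix_mul_assoc)
      also have "\<dots> = trace (transpose (B n) ** (Pi1m ** B n ** Sg))" by (rule trace_mul_sym)
      finally show ?thesis unfolding G_def by (simp add: matrix_mul_assoc)
    qed
    show ?thesis unfolding X'_def AB_def[symmetric] using a b by (simp add: matrix_add_ldistrib trace_add)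
  qed
  have T4: "trace (Pim ** X) = trace (transpose AB ** Pi1m ** AB ** X) + trace (transpose P ** H0 ** P ** X)
      - trace (transpose D ** (H0 + G) ** D ** X)"
  proof -
    have "Pim = transpose AB ** Pi1m ** AB + transpose P ** H0 ** P - transpose D ** (H0 + G) ** D"
      using CS by (simp add: algebra_simps)
    then show ?thesis by (simp add: mat_simps trace_add trace_sub)
  qed
  have T6: "eps * trace (matrix_inv Sst ** D ** X ** transpose D) = trace (transpose D ** (H0 + G) ** D ** X)"
  proof -
    have "eps * trace (matrix_inv Sst ** D ** X ** transpose D) = trace ((eps *\<^sub>R matrix_inv Sst) ** D ** X ** transpose D)"
      by (simp add: trace_scaleR mat_simps)
    also have "\<dots> = trace (((H0 + G) ** D ** X) ** transpose D)" by (simp add: Heq)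
    also have "\<dots> = trace (transpose D ** ((H0 + G) ** D ** X))" by (rule trace_mul_sym)
    finally show ?thesis by (simp add: matrix_mul_assoc)
  qed
  have T7: "eps * trace (matrix_inv Sst ** Sg) = trace (H0 ** Sg) + trace (G ** Sg)"
  proof -
    have "eps * trace (matrix_inv Sst ** Sg) = trace ((eps *\<^sub>R matrix_inv Sst) ** Sg)"
      by (simp add: trace_scaleR mat_simps)
    then show ?thesis by (simp add: Heq mat_simps trace_add)
  qed
  have TI: "trace (R n ** M) + eps * trace (matrix_inv (S n) ** M) + trace (Pi1m ** X') - trace (Pim ** X)
      = eps * trace (matrix_inv Sst ** Sg) + eps * trace (matrix_inv Sst ** D ** X ** transpose D) + trace (Pi1m ** W)"
    unfolding T1 T2 T3 T4 T6 T7 by simp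
  have LD: "ln (det (matrix_inv Sst ** Sg)) = ln (det Sg) - ln (det Sst)" by (rule ln_det_rel[OF Sg Spd])
  show ?thesis
    unfolding stepc_def Dv_def LD D_def[symmetric] using TI
    by (simp add: algebra_simps)
qed


lemma Jc_decomp:
  fixes S :: "nat \<Rightarrow> real^'m^'m" and P :: "nat \<Rightarrow> real^'n^'m" and Sg :: "nat \<Rightarrow> real^'m^'m"
    and Sw :: "nat \<Rightarrow> real^'n^'n" and X0 :: "real^'n^'n"
  assumes S: "\<forall>k<T. pd_mat (S k)" and Sg: "\<forall>k<T. pd_mat (Sg k)"
  shows "Jc eps T A B R Sw F X0 S P Sg =
    (1/2) * trace (PiM eps T A B R F S 0 ** X0)
    + (\<Sum>k<T. (eps/2) * (Dv (Sg k) (SpiM eps T A B R F S k)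
         + trace (matrix_inv (SpiM eps T A B R F S k) ** (P k - PgainM eps T A B R F S k)
              ** Xpol A B Sw X0 P Sg k ** transpose (P k - PgainM eps T A B R F S k)))
       + (1/2) * trace (PiM eps T A B R F S (Suc k) ** Sw k)
       + (eps/2) * (ln (det (S k)) - ln (det (SpiM eps T A B R F S k))))"
proof -
  let ?X = "Xpol A B Sw X0 P Sg"
  let ?Pi = "PiM eps T A B R F S"
  define g where "g k = (1/2) * trace (?Pi k ** ?X k)" for k
  define r where "r k = (eps/2) * (Dv (Sg k) (SpiM eps T A B R F S k)
         + trace (matrix_inv (SpiM eps T A B R F S k) ** (P k - PgainM eps T A B R F S k)
              ** Xpol A B Sw X0 P Sg k ** transpose (P k - PgainM eps T A B R F S k)))
       + (1/2) * trace (PiM eps T A B R F S (Suc k) ** Sw k)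
       + (eps/2) * (ln (det (S k)) - ln (det (SpiM eps T A B R F S k)))" for k
  have step: "stepc eps (R k) (S k) (Sg k) (Mpol A B Sw X0 P Sg k) = r k + (g k - g (Suc k))"
    if k: "k < T" for k
  proof -
    have Pi1: "psd_mat (?Pi (Suc k))" using Pi_psd[OF S] k by simp
    have "stepc eps (R k) (S k) (Sg k) (Mpol A B Sw X0 P Sg k) + (1/2) * trace (?Pi (Suc k) ** ?X (Suc k))
        - (1/2) * trace (?Pi k ** ?X k) = r k"
      unfolding r_def Mpol_def Xpol.simps(2)
      by (rule step_identity[OF k _ Pi1]) (use S Sg k in auto)
    then show ?thesis unfolding g_def by simp
  qed
  have "Jc eps T A B R Sw F X0 S P Sg = (\<Sum>k<T. r k + (g k - g (Suc k))) + (1/2) * trace (F ** ?X T)"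
    unfolding Jc_def using step by simp
  also have "\<dots> = (\<Sum>k<T. r k) + (g 0 - g T) + (1/2) * trace (F ** ?X T)"
    by (simp add: sum.distrib sum_lessThan_telescope')
  also have "g T = (1/2) * trace (F ** ?X T)" unfolding g_def by (simp add: PiM_T)
  finally show ?thesis unfolding r_def g_def by simp
qed

lemma Dv_self: "pd_mat (M::real^'k^'k) \<Longrightarrow> Dv M M = 0"
  by (simp add: Dv_def invertible_inv(2) pd_invertible trace_I)

lemma trace_nonneg_D:
  fixes Sst :: "real^'m^'m" and D :: "real^'n^'m" and X :: "real^'n^'n"
  assumes "pd_mat Sst" "psd_mat X"
  shows "0 \<le> trace (matrix_inv Sst ** D ** X ** transpose D)"
proof -
  have "trace (matrix_inv Sst ** D ** X ** transpose D) = trace (matrix_inv Sst ** (D ** X ** transpose D))"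
    by (simp add: matrix_mul_assoc)
  also have "\<dots> \<ge> 0"
    by (rule trace_psd_mult_nonneg[OF pd_psd[OF pd_inv[OF assms(1)]] psd_congr'[OF assms(2)]])
  finally show ?thesis .
qed

lemma Jc_opt:
  fixes S :: "nat \<Rightarrow> real^'m^'m" and P :: "nat \<Rightarrow> real^'n^'m" and Sg :: "nat \<Rightarrow> real^'m^'m"
    and Sw :: "nat \<Rightarrow> real^'n^'n" and X0 :: "real^'n^'n"
  assumes S: "\<forall>k<T. pd_mat (S k)" and Sg: "\<forall>k<T. pd_mat (Sg k)"
    and X0: "psd_mat X0" and Sw: "\<forall>k<T. psd_mat (Sw k)"
  shows "Jc eps T A B R Sw F X0 S (PgainM eps T A B R F S) (SpiM eps T A B R F S)
         \<le> Jc eps T A B R Sw F X0 S P Sg"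
proof -
  let ?Sst = "SpiM eps T A B R F S"
  have Spd: "\<forall>k<T. pd_mat (?Sst k)"
    using step_facts(1) Pi_psd[OF S] S by simp
  have Xp: "psd_mat (Xpol A B Sw X0 P Sg k)" if "k < T" for k
    by (rule Xpol_psd[OF X0 _ Sw]) (use Sg pd_psd that in auto)
  have d1: "Jc eps T A B R Sw F X0 S (PgainM eps T A B R F S) ?Sst =
    (1/2) * trace (PiM eps T A B R F S 0 ** X0)
    + (\<Sum>k<T. (1/2) * trace (PiM eps T A B R F S (Suc k) ** Sw k)
       + (eps/2) * (ln (det (S k)) - ln (det (?Sst k))))"
    unfolding Jc_decomp[OF S Spd] by (intro arg_cong2[where f="(+)"] refl sum.cong) (use Spd in \<open>auto simp: Dv_self trace_def\<close>)
  have d2: "Jc eps T A B R Sw F X0 S P Sg \<ge>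
    (1/2) * trace (PiM eps T A B R F S 0 ** X0)
    + (\<Sum>k<T. (1/2) * trace (PiM eps T A B R F S (Suc k) ** Sw k)
       + (eps/2) * (ln (det (S k)) - ln (det (?Sst k))))"
    unfolding Jc_decomp[OF S Sg]
  proof (intro add_left_mono sum_mono)
    fix k assume "k \<in> {..<T}"
    then have k: "k < T" by simp
    have "0 \<le> Dv (Sg k) (?Sst k)" using gibbs_matrix(1) Sg Spd k by blast
    moreover have "0 \<le> trace (matrix_inv (?Sst k) ** (P k - PgainM eps T A B R F S k)
              ** Xpol A B Sw X0 P Sg k ** transpose (P k - PgainM eps T A B R F S k))"
      by (rule trace_nonneg_D) (use Spd k Xp in auto)
    ultimately show "(1/2) * trace (PiM eps T A B R F S (Suc k) ** Sw k)
       + (eps/2) * (ln (det (S k)) - ln (det (?Sst k)))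
      \<le> (eps/2) * (Dv (Sg k) (?Sst k)
         + trace (matrix_inv (?Sst k) ** (P k - PgainM eps T A B R F S k)
              ** Xpol A B Sw X0 P Sg k ** transpose (P k - PgainM eps T A B R F S k)))
       + (1/2) * trace (PiM eps T A B R F S (Suc k) ** Sw k)
       + (eps/2) * (ln (det (S k)) - ln (det (?Sst k)))"
      using eps by simp
  qed
  show ?thesis using d1 d2 by simp
qed

lemma Jc_nonneg:
  fixes S :: "nat \<Rightarrow> real^'m^'m" and P :: "nat \<Rightarrow> real^'n^'m" and Sg :: "nat \<Rightarrow> real^'m^'m"
    and Sw :: "nat \<Rightarrow> real^'n^'n" and X0 :: "real^'n^'n"
  assumes S: "\<forall>k<T. pd_mat (S k)" and Sg: "\<forall>k<T. pd_mat (Sg k)"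
    and X0: "psd_mat X0" and Sw: "\<forall>k<T. psd_mat (Sw k)"
  shows "0 \<le> Jc eps T A B R Sw F X0 S P Sg"
proof -
  have Sgp: "\<forall>k<T. psd_mat (Sg k)" using Sg pd_psd by blast
  have st: "0 \<le> stepc eps (R k) (S k) (Sg k) (Mpol A B Sw X0 P Sg k)" if k: "k < T" for k
  proof -
    let ?X = "Xpol A B Sw X0 P Sg k"
    have Xp: "psd_mat ?X" by (rule Xpol_psd[OF X0 Sgp Sw]) (use k in simp)
    have Mp: "psd_mat (Mpol A B Sw X0 P Sg k)" by (rule Mpol_psd[OF X0 Sgp Sw k])
    have a: "0 \<le> trace (R k ** Mpol A B Sw X0 P Sg k)"
      by (rule trace_psd_mult_nonneg[OF pd_psd Mp]) (use Rpd k in auto)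
    have Skp: "pd_mat (S k)" "pd_mat (Sg k)" using S Sg k by auto
    have b: "0 \<le> Dv (Sg k) (S k)" by (rule gibbs_matrix(1)[OF Skp(2) Skp(1)])
    have c: "0 \<le> trace (matrix_inv (S k) ** P k ** ?X ** transpose (P k))"
      by (rule trace_nonneg_D[OF Skp(1) Xp])
    have LD: "ln (det (matrix_inv (S k) ** Sg k)) = ln (det (Sg k)) - ln (det (S k))"
      by (rule ln_det_rel[OF Skp(2) Skp(1)])
    have e: "trace (matrix_inv (S k) ** Mpol A B Sw X0 P Sg k) - real CARD('m) - ln (det (Sg k)) + ln (det (S k))
       = Dv (Sg k) (S k) + trace (matrix_inv (S k) ** P k ** ?X ** transpose (P k))"
      unfolding Dv_def LD Mpol_def by (simp add: mat_simps trace_add matrix_mul_assoc)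
    show ?thesis unfolding stepc_def e using a b c eps by simp
  qed
  have "0 \<le> trace (F ** Xpol A B Sw X0 P Sg T)"
    by (rule trace_psd_mult_nonneg[OF Fpsd Xpol_psd[OF X0 Sgp Sw]]) simp
  moreover have "0 \<le> (\<Sum>k<T. stepc eps (R k) (S k) (Sg k) (Mpol A B Sw X0 P Sg k))"
    by (rule sum_nonneg) (use st in auto)
  ultimately show ?thesis unfolding Jc_def by simp
qed

lemma Jc_prior_change:
  fixes S S' :: "nat \<Rightarrow> real^'m^'m" and P :: "nat \<Rightarrow> real^'n^'m" and Sg :: "nat \<Rightarrow> real^'m^'m"
    and Sw :: "nat \<Rightarrow> real^'n^'n" and X0 :: "real^'n^'n"
  assumes S: "\<forall>k<T. pd_mat (S k)" and S': "\<forall>k<T. pd_mat (S' k)"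
    and M: "\<forall>k<T. Mpol A B Sw X0 P Sg k = S' k"
  shows "Jc eps T A B R Sw F X0 S' P Sg = Jc eps T A B R Sw F X0 S P Sg - (eps/2) * (\<Sum>k<T. Dv (S' k) (S k))"
proof -
  have st: "stepc eps (R k) (S' k) (Sg k) (Mpol A B Sw X0 P Sg k)
      = stepc eps (R k) (S k) (Sg k) (Mpol A B Sw X0 P Sg k) - (eps/2) * Dv (S' k) (S k)"
    if k: "k < T" for k
  proof -
    have p: "pd_mat (S k)" "pd_mat (S' k)" using S S' k by auto
    have LD: "ln (det (matrix_inv (S k) ** S' k)) = ln (det (S' k)) - ln (det (S k))"
      by (rule ln_det_rel[OF p(2) p(1)])
    have I: "trace (matrix_inv (S' k) ** S' k) = real CARD('m)"
      by (simp add: invertible_inv(2) pd_invertible[OF p(2)] trace_I)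
    show ?thesis unfolding M[rule_format, OF k] stepc_def Dv_def LD using I
      by (simp add: algebra_simps)
  qed
  show ?thesis unfolding Jc_def using st
    by (simp add: sum_subtractf sum_distrib_left)
qed

end



lemma tendsto_Spi:
  fixes S C :: "nat \<Rightarrow> real^'m^'m"
  assumes S: "S \<longlonglongrightarrow> S0" and C: "C \<longlonglongrightarrow> C0"
    and Sp: "\<And>j. psd_mat (S j)" and Cp: "\<And>j. psd_mat (C j)" and C0p: "psd_mat C0"
  shows "(\<lambda>j. Spi_of (S j) (C j)) \<longlonglongrightarrow> Spi_of S0 C0"
proof -
  have S0p: "psd_mat S0" by (rule psd_closed[OF S Sp])
  have e: "Spi_of (S j) (C j) = S j ** matrix_inv (mat 1 + C j ** S j)" for j
    by (rule spi_formula[OF Sp Cp])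
  have e0: "Spi_of S0 C0 = S0 ** matrix_inv (mat 1 + C0 ** S0)"
    by (rule spi_formula[OF S0p C0p])
  have inv: "invertible (mat 1 + C0 ** S0)" by (rule psd_inj_plus[OF S0p C0p])
  have "(\<lambda>j. mat 1 + C j ** S j) \<longlonglongrightarrow> mat 1 + C0 ** S0"
    by (intro tendsto_add tendsto_const tendsto_matmul C S)
  then have "(\<lambda>j. matrix_inv (mat 1 + C j ** S j)) \<longlonglongrightarrow> matrix_inv (mat 1 + C0 ** S0)"
    by (rule tendsto_matrix_inv[OF _ inv])
  then have "(\<lambda>j. S j ** matrix_inv (mat 1 + C j ** S j)) \<longlonglongrightarrow> S0 ** matrix_inv (mat 1 + C0 ** S0)"
    by (intro tendsto_matmul S)
  then show ?thesis unfolding e e0 .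
qed

context
  fixes eps :: real and T :: nat and A :: "nat \<Rightarrow> real^'n^'n" and B :: "nat \<Rightarrow> real^'m^'n"
    and R :: "nat \<Rightarrow> real^'m^'m" and F :: "real^'n^'n"
  assumes eps: "eps > 0" and Rpd: "\<forall>k<T. pd_mat (R k)" and Fpsd: "psd_mat F"
begin

lemma PiRev_PiM: "d \<le> T \<Longrightarrow> PiRev eps T A B R F S d = PiM eps T A B R F S (T - d)"
  by (simp add: PiM_def)

lemma PiRev_cont:
  fixes sig :: "nat \<Rightarrow> nat \<Rightarrow> real^'m^'m" and rho :: "nat \<Rightarrow> real^'m^'m"
  assumes pd: "\<forall>j. \<forall>k<T. pd_mat (sig j k)" and lim: "\<forall>k<T. (\<lambda>j. sig j k) \<longlonglongrightarrow> rho k"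
  shows "d \<le> T \<Longrightarrow> (\<lambda>j. PiRev eps T A B R F (sig j) d) \<longlonglongrightarrow> PiRev eps T A B R F rho d
           \<and> psd_mat (PiRev eps T A B R F rho d)"
proof (induction d)
  case 0
  then show ?case using Fpsd by simp
next
  case (Suc d)
  then have d: "d < T" by simp
  define k where "k = T - Suc d"
  have k: "k < T" unfolding k_def using d by simp
  have IH: "(\<lambda>j. PiRev eps T A B R F (sig j) d) \<longlonglongrightarrow> PiRev eps T A B R F rho d"
      "psd_mat (PiRev eps T A B R F rho d)" using Suc d by auto
  have psdj: "psd_mat (PiRev eps T A B R F (sig j) d)" for j
    unfolding PiRev_PiM[OF less_imp_le[OF d]]
    by (rule Pi_psd[OF eps Rpd Fpsd]) (use pd in auto)
  have psdj': "psd_mat (PiRev eps T A B R F (sig j) (Suc d))" for j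
    unfolding PiRev_PiM[OF Suc.prems]
    by (rule Pi_psd[OF eps Rpd Fpsd]) (use pd in auto)
  have Rk: "pd_mat (R k)" using Rpd k by blast
  define Cs where "Cs j = Cmat eps (R k) (B k) (PiRev eps T A B R F (sig j) d)" for j
  define C0 where "C0 = Cmat eps (R k) (B k) (PiRev eps T A B R F rho d)"
  have Cconv: "Cs \<longlonglongrightarrow> C0"
    unfolding Cmat_def Cs_def C0_def by (intro tendsto_scaleR tendsto_add tendsto_const tendsto_matmul IH(1))
  have Cp: "psd_mat (Cs j)" for j unfolding Cs_def by (rule Cmat_psd[OF Rk psdj eps])
  have C0p: "psd_mat C0" unfolding C0_def by (rule Cmat_psd[OF Rk IH(2) eps])
  have Sk: "(\<lambda>j. sig j k) \<longlonglongrightarrow> rho k" using lim k by blast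
  have Skp: "psd_mat (sig j k)" for j using pd k pd_psd by blast
  have Spi: "(\<lambda>j. Spi_of (sig j k) (Cs j)) \<longlonglongrightarrow> Spi_of (rho k) C0"
    by (rule tendsto_Spi[OF Sk Cconv Skp Cp C0p])
  note Spi = Spi[unfolded Cs_def C0_def]
  have conv: "(\<lambda>j. PiRev eps T A B R F (sig j) (Suc d)) \<longlonglongrightarrow> PiRev eps T A B R F rho (Suc d)"
    unfolding PiRev.simps(2) Let_def k_def[symmetric]
    by (intro tendsto_diff tendsto_scaleR tendsto_const tendsto_matmul IH(1) Spi)
  have "psd_mat (PiRev eps T A B R F rho (Suc d))" by (rule psd_closed[OF conv psdj'])
  then show ?case using conv by blast
qed

lemma PiM_cont:
  fixes sig :: "nat \<Rightarrow> nat \<Rightarrow> real^'m^'m" and rho :: "nat \<Rightarrow> real^'m^'m"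
  assumes pd: "\<forall>j. \<forall>k<T. pd_mat (sig j k)" and lim: "\<forall>k<T. (\<lambda>j. sig j k) \<longlonglongrightarrow> rho k"
  shows "(\<lambda>j. PiM eps T A B R F (sig j) k) \<longlonglongrightarrow> PiM eps T A B R F rho k
           \<and> psd_mat (PiM eps T A B R F rho k)"
  unfolding PiM_def by (rule PiRev_cont[OF pd lim]) simp

lemma SpiM_cont:
  fixes sig :: "nat \<Rightarrow> nat \<Rightarrow> real^'m^'m" and rho :: "nat \<Rightarrow> real^'m^'m"
  assumes pd: "\<forall>j. \<forall>k<T. pd_mat (sig j k)" and lim: "\<forall>k<T. (\<lambda>j. sig j k) \<longlonglongrightarrow> rho k"
    and k: "k < T"
  shows "(\<lambda>j. SpiM eps T A B R F (sig j) k) \<longlonglongrightarrow> SpiM eps T A B R F rho k"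
proof -
  have Rk: "pd_mat (R k)" using Rpd k by blast
  have P: "(\<lambda>j. PiM eps T A B R F (sig j) (Suc k)) \<longlonglongrightarrow> PiM eps T A B R F rho (Suc k)"
    "psd_mat (PiM eps T A B R F rho (Suc k))" using PiM_cont[OF pd lim] by auto
  have psdj: "psd_mat (PiM eps T A B R F (sig j) (Suc k))" for j
    by (rule Pi_psd[OF eps Rpd Fpsd]) (use pd k in auto)
  have Cconv: "(\<lambda>j. Cmat eps (R k) (B k) (PiM eps T A B R F (sig j) (Suc k))) \<longlonglongrightarrow> Cmat eps (R k) (B k) (PiM eps T A B R F rho (Suc k))"
    unfolding Cmat_def by (intro tendsto_scaleR tendsto_add tendsto_const tendsto_matmul P(1))
  have Sk: "(\<lambda>j. sig j k) \<longlonglongrightarrow> rho k" using lim k by blast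
  have Skp: "psd_mat (sig j k)" for j using pd k pd_psd by blast
  show ?thesis unfolding SpiM_def
    by (rule tendsto_Spi[OF Sk Cconv Skp Cmat_psd[OF Rk psdj eps] Cmat_psd[OF Rk P(2) eps]])
qed

lemma PgainM_cont:
  fixes sig :: "nat \<Rightarrow> nat \<Rightarrow> real^'m^'m" and rho :: "nat \<Rightarrow> real^'m^'m"
  assumes pd: "\<forall>j. \<forall>k<T. pd_mat (sig j k)" and lim: "\<forall>k<T. (\<lambda>j. sig j k) \<longlonglongrightarrow> rho k"
    and k: "k < T"
  shows "(\<lambda>j. PgainM eps T A B R F (sig j) k) \<longlonglongrightarrow> PgainM eps T A B R F rho k"
  unfolding PgainM_def
  by (intro tendsto_minus tendsto_scaleR tendsto_const tendsto_matmul SpiM_cont[OF pd lim k]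
      PiM_cont[OF pd lim, THEN conjunct1])

lemma SxM_cont:
  fixes sig :: "nat \<Rightarrow> nat \<Rightarrow> real^'m^'m" and rho :: "nat \<Rightarrow> real^'m^'m" and Sw Sxini
  assumes pd: "\<forall>j. \<forall>k<T. pd_mat (sig j k)" and lim: "\<forall>k<T. (\<lambda>j. sig j k) \<longlonglongrightarrow> rho k"
  shows "k \<le> T \<Longrightarrow> (\<lambda>j. SxM eps T A B R Sw F Sxini (sig j) k) \<longlonglongrightarrow> SxM eps T A B R Sw F Sxini rho k"
proof (induction k)
  case 0
  then show ?case by simp
next
  case (Suc k)
  then have k: "k < T" by simp
  have IH: "(\<lambda>j. SxM eps T A B R Sw F Sxini (sig j) k) \<longlonglongrightarrow> SxM eps T A B R Sw F Sxini rho k"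
    using Suc k by simp
  show ?case unfolding SxM.simps(2) Let_def
    by (intro tendsto_add tendsto_matmul tendsto_transpose tendsto_const IH
        PgainM_cont[OF pd lim k] SpiM_cont[OF pd lim k])
qed

lemma Aop_cont:
  fixes sig :: "nat \<Rightarrow> nat \<Rightarrow> real^'m^'m" and rho :: "nat \<Rightarrow> real^'m^'m" and Sw Sxini
  assumes pd: "\<forall>j. \<forall>k<T. pd_mat (sig j k)" and lim: "\<forall>k<T. (\<lambda>j. sig j k) \<longlonglongrightarrow> rho k"
    and k: "k < T"
  shows "(\<lambda>j. Aop eps T A B R Sw F Sxini (sig j) k) \<longlonglongrightarrow> Aop eps T A B R Sw F Sxini rho k"
  unfolding Aop_def using k
  by (simp, intro tendsto_add tendsto_matmul tendsto_transpose SpiM_cont[OF pd lim k]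
      PgainM_cont[OF pd lim k] SxM_cont[OF pd lim]) simp

end


lemma sym_quad_zero:
  fixes M :: "real^'n^'n"
  assumes s: "transpose M = M" and q: "\<And>v. v \<bullet> (M *v v) = 0"
  shows "M = 0"
proof -
  have uw: "u \<bullet> (M *v w) = 0" for u w
  proof -
    have "(u + w) \<bullet> (M *v (u + w)) = u \<bullet> (M *v u) + u \<bullet> (M *v w) + w \<bullet> (M *v u) + w \<bullet> (M *v w)"
      by (simp add: matrix_vector_right_distrib inner_add_left inner_add_right)
    moreover have "w \<bullet> (M *v u) = u \<bullet> (M *v w)" using inner_matrix_sym[OF s] by blast
    ultimately show ?thesis using q[of "u + w"] q[of u] q[of w] by simp
  qed
  have "M *v w = 0" for w using uw[of "M *v w" w] by simp
  then show ?thesis by (simp add: matrix_eq)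
qed

theorem proposition5:
  fixes eps :: real and T :: nat
    and A :: "nat \<Rightarrow> real^'n^'n" and B :: "nat \<Rightarrow> real^'m^'n"
    and R :: "nat \<Rightarrow> real^'m^'m" and Sw :: "nat \<Rightarrow> real^'n^'n"
    and F Sxini :: "real^'n^'n"
    and Srho0 :: "nat \<Rightarrow> real^'m^'m"
    and seq :: "nat \<Rightarrow> nat \<Rightarrow> real^'m^'m"
  assumes "T \<ge> 1" and "eps > 0"
    and "\<forall>k<T. pd_mat (R k)" and "\<forall>k<T. pd_mat (Sw k)"
    and "psd_mat F" and "psd_mat Sxini"
    and "\<forall>k<T. pd_mat (Srho0 k)"
    and "seq 0 = Srho0"
    and "\<forall>i. seq (Suc i) = Aop eps T A B R Sw F Sxini (seq i)"
  shows "{rho. cluster_point T seq rho}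
           \<subseteq> {rho. (\<forall>k<T. psd_mat (rho k))
                   \<and> (\<forall>k<T. rho k = Aop eps T A B R Sw F Sxini rho k)}"
proof
  note eps = assms(2) and Rpd = assms(3) and Swpd = assms(4) and Fpsd = assms(5) and X0 = assms(6)
    and S0 = assms(7) and seq0 = assms(8) and seqS = assms(9)
  have Swp: "\<forall>k<T. psd_mat (Sw k)" using Swpd pd_psd by blast
  have SpiM_pd: "\<forall>k<T. pd_mat (SpiM eps T A B R F S k)" if S: "\<forall>k<T. pd_mat (S k)" for S
  proof (intro allI impI)
    fix k assume k: "k < T"
    show "pd_mat (SpiM eps T A B R F S k)"
      by (rule step_facts(1)[OF eps Rpd Fpsd k]) (use S k Pi_psd[OF eps Rpd Fpsd S, of "Suc k"] in auto)
  qed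
  have seqM: "seq (Suc i) k = Mpol A B Sw Sxini (PgainM eps T A B R F (seq i)) (SpiM eps T A B R F (seq i)) k"
    if "k < T" for i k
    using seqS Aop_Mpol[OF that] by simp
  have pdseq: "\<forall>k<T. pd_mat (seq i k)" for i
  proof (induction i)
    case 0
    then show ?case using S0 seq0 by simp
  next
    case (Suc i)
    show ?case
    proof (intro allI impI)
      fix k assume k: "k < T"
      show "pd_mat (seq (Suc i) k)" unfolding seqM[OF k]
        by (rule Mpol_pd[OF X0 SpiM_pd[OF Suc] Swp k])
    qed
  qed
  define f where "f i = Jc eps T A B R Sw F Sxini (seq i) (PgainM eps T A B R F (seq i)) (SpiM eps T A B R F (seq i))" for i
  define D where "D i k = Dv (seq (Suc i) k) (seq i k)" for i k
  have Dnn: "0 \<le> D i k" if "k < T" for i k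
    unfolding D_def by (rule gibbs_matrix(1)) (use pdseq that in auto)
  have fdec: "f (Suc i) + (eps/2) * (\<Sum>k<T. D i k) \<le> f i" for i
  proof -
    have "f (Suc i) \<le> Jc eps T A B R Sw F Sxini (seq (Suc i)) (PgainM eps T A B R F (seq i)) (SpiM eps T A B R F (seq i))"
      unfolding f_def by (rule Jc_opt[OF eps Rpd Fpsd pdseq SpiM_pd[OF pdseq] X0 Swp])
    also have "\<dots> = f i - (eps/2) * (\<Sum>k<T. D i k)"
      unfolding f_def D_def
      by (rule Jc_prior_change[OF eps Rpd Fpsd pdseq pdseq]) (use seqM in auto)
    finally show ?thesis by simp
  qed
  have fnn: "0 \<le> f i" for i
    unfolding f_def by (rule Jc_nonneg[OF eps Rpd Fpsd pdseq SpiM_pd[OF pdseq] X0 Swp])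
  have Ssum: "0 \<le> (\<Sum>k<T. D i k)" for i by (rule sum_nonneg) (use Dnn in auto)
  have "decseq f"
  proof (rule decseq_SucI)
    fix i
    have "0 \<le> (eps/2) * (\<Sum>k<T. D i k)" using eps Ssum[of i] by simp
    then show "f (Suc i) \<le> f i" using fdec[of i] by linarith
  qed
  then obtain L where fL: "f \<longlonglongrightarrow> L" using decseq_convergent[of f 0] fnn by blast
  have g0: "(\<lambda>i. f i - f (Suc i)) \<longlonglongrightarrow> 0"
    using tendsto_diff[OF fL LIMSEQ_Suc[OF fL]] by simp
  have D0: "(\<lambda>i. D i k) \<longlonglongrightarrow> 0" if k: "k < T" for k
  proof (rule tendsto_sandwich[of "\<lambda>i. 0" _ _ "\<lambda>i. (2 / eps) * (f i - f (Suc i))"])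
    show "\<forall>\<^sub>F i in sequentially. 0 \<le> D i k" using Dnn k by simp
    show "\<forall>\<^sub>F i in sequentially. D i k \<le> (2 / eps) * (f i - f (Suc i))"
    proof (rule always_eventually, rule allI)
      fix i
      have "D i k \<le> (\<Sum>k<T. D i k)" by (rule member_le_sum) (use Dnn k in auto)
      then have "(eps/2) * D i k \<le> (eps/2) * (\<Sum>k<T. D i k)" using eps by simp
      then have "(eps/2) * D i k \<le> f i - f (Suc i)" using fdec[of i] by linarith
      then show "D i k \<le> (2 / eps) * (f i - f (Suc i))" using eps by (simp add: field_simps)
    qed
    show "(\<lambda>i. 0) \<longlonglongrightarrow> (0::real)" by simp
    show "(\<lambda>i. (2 / eps) * (f i - f (Suc i))) \<longlonglongrightarrow> 0"
      using tendsto_mult[OF tendsto_const g0, of "2 / eps"] by simp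
  qed
  fix rho assume "rho \<in> {rho. cluster_point T seq rho}"
  then obtain r where r: "strict_mono r" and lim: "\<forall>k<T. (\<lambda>j. seq (r j) k) \<longlonglongrightarrow> rho k"
    by (auto simp: cluster_point_def)
  have pdr: "\<forall>j. \<forall>k<T. pd_mat (seq (r j) k)" using pdseq by blast
  have rpsd: "\<forall>k<T. psd_mat (rho k)"
  proof (intro allI impI)
    fix k assume k: "k < T"
    show "psd_mat (rho k)" by (rule psd_closed[of "\<lambda>j. seq (r j) k"]) (use lim k pdr pd_psd in auto)
  qed
  have fixpt: "rho k = Aop eps T A B R Sw F Sxini rho k" if k: "k < T" for k
  proof -
    have AopL: "(\<lambda>j. seq (Suc (r j)) k) \<longlonglongrightarrow> Aop eps T A B R Sw F Sxini rho k"
      using Aop_cont[OF eps Rpd Fpsd pdr lim k, where A=A and B=B and Sw=Sw and Sxini=Sxini] seqS by simp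
    have Ak: "psd_mat (Aop eps T A B R Sw F Sxini rho k)"
      by (rule psd_closed[OF AopL]) (use pdseq k pd_psd in auto)
    have Lk: "(\<lambda>j. seq (r j) k) \<longlonglongrightarrow> rho k" using lim k by blast
    have Dr: "(\<lambda>j. D (r j) k) \<longlonglongrightarrow> 0" using LIMSEQ_subseq_LIMSEQ[OF D0[OF k] r] by (simp add: o_def)
    have q: "v \<bullet> ((Aop eps T A B R Sw F Sxini rho k - rho k) *v v) = 0" for v
    proof -
      have ineq: "\<bar>v \<bullet> (seq (Suc (r j)) k *v v) - v \<bullet> (seq (r j) k *v v)\<bar> \<le> gam (D (r j) k) * (v \<bullet> (seq (r j) k *v v))" for j
        unfolding D_def by (rule gibbs_matrix(2)) (use pdseq k in auto)
      have l1: "(\<lambda>j. \<bar>v \<bullet> (seq (Suc (r j)) k *v v) - v \<bullet> (seq (r j) k *v v)\<bar>)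
          \<longlonglongrightarrow> \<bar>v \<bullet> (Aop eps T A B R Sw F Sxini rho k *v v) - v \<bullet> (rho k *v v)\<bar>"
        by (intro tendsto_rabs tendsto_diff tendsto_inner tendsto_const tendsto_mv AopL Lk)
      have l2: "(\<lambda>j. gam (D (r j) k) * (v \<bullet> (seq (r j) k *v v))) \<longlonglongrightarrow> 0 * (v \<bullet> (rho k *v v))"
        by (intro tendsto_mult gam_tendsto Dr tendsto_inner tendsto_const tendsto_mv Lk)
      have "\<bar>v \<bullet> (Aop eps T A B R Sw F Sxini rho k *v v) - v \<bullet> (rho k *v v)\<bar> \<le> 0 * (v \<bullet> (rho k *v v))"
        by (rule LIMSEQ_le[OF l1 l2]) (use ineq in auto)
      then show ?thesis by (simp add: matrix_vector_mult_diff_rdistrib inner_diff_right)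
    qed
    have "Aop eps T A B R Sw F Sxini rho k - rho k = 0"
      by (rule sym_quad_zero[OF _ q]) (simp add: transpose_diff psd_sym[OF Ak] psd_sym rpsd k)
    then show ?thesis by simp
  qed
  show "rho \<in> {rho. (\<forall>k<T. psd_mat (rho k)) \<and> (\<forall>k<T. rho k = Aop eps T A B R Sw F Sxini rho k)}"
    using rpsd fixpt by blast
qed


end
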